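(* Let $\mu>0$ and let $\omega_{k,m}=\sqrt{k^2+q_m^2+\mu^2}$ for $k\in\mathbb{R}^{d-1}$, $m\in\mathbb{N}$, with $(q_m)$ the sequence described in the context. There is a linear continuous map $(\mathcal{S}(\mathbb{R}^{d-1})\otimes s(\mathbb{N}))^2\ni(\hat f^+,\hat f^-)\mapsto\hat f'\in\mathcal{S}(\mathbb{R}^d)$ such that \[ \hat f^\pm_m(k)=\hat f'(\pm\omega_{k,m},\pm k)\qquad\forall k\in\mathbb{R}^{d-1},\ m\in\mathbb{N}. \]
   Context: $d\ge1$, $S>0$, $c>0$. $\mathbb{N}=\{0,1,2,\dots\}$. $q_0=0$; for $p\ge1$, $q_{2p}$ is the unique solution of $c^{-1}\tan(qS)=-q$ in $((p-\frac12)\frac\pi S,p\frac\pi S)$ and $q_{2p-1}$ the unique solution of $q\tan(qS)=c^{-1}$ in $((p-1)\frac\pi S,(p-\frac12)\frac\pi S)$ (so $(q_m)$ is increasing, with $q_m=\frac{\pi}{2S}(m-1)+O(1/m)$). $s(\mathbb{N})$ is the space of sequences decaying faster than any power; $\mathcal{S}(\mathbb{R}^{d-1})\otimes s(\mathbb{N})$ is the space of sequences $(\hat f_m)_m$ of Schwartz functions with finite seminorms $\sum_m\sup_k m^c|k^\alpha||\partial^\beta\hat f_m(k)|$ for all multi-indices $\alpha,\beta$ and $c\ge0$, with the corresponding topology. *)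

theory Defs
  imports "HOL-Analysis.Analysis"
begin

text \<open>Points of R^n are represented as functions nat => real vanishing from index n on.\<close>
definition Eucl :: "nat \<Rightarrow> (nat \<Rightarrow> real) set" where
  "Eucl n = {x. \<forall>i\<ge>n. x i = 0}"

definition sqnorm :: "nat \<Rightarrow> (nat \<Rightarrow> real) \<Rightarrow> real" where
  "sqnorm n x = (\<Sum>i<n. (x i)\<^sup>2)"

definition mon :: "nat \<Rightarrow> (nat \<Rightarrow> nat) \<Rightarrow> (nat \<Rightarrow> real) \<Rightarrow> real" where
  "mon n \<alpha> x = (\<Prod>i<n. x i ^ \<alpha> i)"

definition pd :: "nat \<Rightarrow> ((nat \<Rightarrow> real) \<Rightarrow> complex) \<Rightarrow> (nat \<Rightarrow> real) \<Rightarrow> complex" where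
  "pd i f x = vector_derivative (\<lambda>t. f (x(i := t))) (at (x i))"

text \<open>Iterated partial derivative; a multi-index beta is given as a list of directions.\<close>
fun pds :: "nat list \<Rightarrow> ((nat \<Rightarrow> real) \<Rightarrow> complex) \<Rightarrow> (nat \<Rightarrow> real) \<Rightarrow> complex" where
  "pds [] f = f"
| "pds (i # is) f = pd i (pds is f)"

definition schwartz :: "nat \<Rightarrow> ((nat \<Rightarrow> real) \<Rightarrow> complex) \<Rightarrow> bool" where
  "schwartz n f \<longleftrightarrow> (\<forall>x. x \<notin> Eucl n \<longrightarrow> f x = 0) \<and>
     (\<forall>\<beta>. set \<beta> \<subseteq> {..<n} \<longrightarrow>
        (\<forall>x\<in>Eucl n. \<forall>i<n. (\<lambda>t. pds \<beta> f (x(i := t))) differentiable (at (x i))) \<and>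
        (\<forall>\<alpha>. bounded ((\<lambda>x. complex_of_real (mon n \<alpha> x) * pds \<beta> f x) ` Eucl n)))"

definition snorm :: "nat \<Rightarrow> (nat \<Rightarrow> nat) \<Rightarrow> nat list \<Rightarrow> ((nat \<Rightarrow> real) \<Rightarrow> complex) \<Rightarrow> real" where
  "snorm n \<alpha> \<beta> f = (SUP x\<in>Eucl n. norm (complex_of_real (mon n \<alpha> x) * pds \<beta> f x))"

text \<open>The space S(R^n) tensor s(N): sequences of Schwartz functions with finite seminorms.\<close>
definition ts_space :: "nat \<Rightarrow> (nat \<Rightarrow> (nat \<Rightarrow> real) \<Rightarrow> complex) \<Rightarrow> bool" where
  "ts_space n F \<longleftrightarrow> (\<forall>m. schwartz n (F m)) \<and>
     (\<forall>c \<alpha> \<beta>. set \<beta> \<subseteq> {..<n} \<longrightarrow> summable (\<lambda>m. real m ^ c * snorm n \<alpha> \<beta> (F m)))"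

definition tnorm :: "nat \<Rightarrow> nat \<times> (nat \<Rightarrow> nat) \<times> nat list \<Rightarrow> (nat \<Rightarrow> (nat \<Rightarrow> real) \<Rightarrow> complex) \<Rightarrow> real" where
  "tnorm n idx F = (case idx of (c, \<alpha>, \<beta>) \<Rightarrow> (\<Sum>m. real m ^ c * snorm n \<alpha> \<beta> (F m)))"

definition pt :: "real \<Rightarrow> (nat \<Rightarrow> real) \<Rightarrow> (nat \<Rightarrow> real)" where
  "pt t k = (\<lambda>i. case i of 0 \<Rightarrow> t | Suc j \<Rightarrow> k j)"

definition qseq :: "real \<Rightarrow> real \<Rightarrow> nat \<Rightarrow> real" where
  "qseq S c m =
    (if m = 0 then 0
     else if even m then
       (THE q. (real (m div 2) - 1/2) * pi / S < q \<and> q < real (m div 2) * pi / S \<and> tan (q * S) / c = - q)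
     else
       (THE q. (real ((m + 1) div 2) - 1) * pi / S < q \<and> q < (real ((m + 1) div 2) - 1/2) * pi / S
               \<and> q * tan (q * S) = 1 / c))"

definition omega :: "real \<Rightarrow> real \<Rightarrow> real \<Rightarrow> nat \<Rightarrow> (nat \<Rightarrow> real) \<Rightarrow> nat \<Rightarrow> real" where
  "omega S c \<mu> n k m = sqrt (sqnorm n k + (qseq S c m)\<^sup>2 + \<mu>\<^sup>2)"

end

theory Submission
  imports Defs "HOL-Computational_Algebra.Polynomial"
begin


lemma qseq_odd_eq: "qseq S c (2*j+1) = (THE q. real j * pi / S < q \<and> q < (real j + 1/2) * pi / S \<and> q * tan (q * S) = 1 / c)"
proof -
  have "(2*j+1+1) div 2 = j+1" by simp
  then show ?thesis unfolding qseq_def by (simp add: algebra_simps)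
qed

lemma qseq_even_eq: "qseq S c (2*j+2) = (THE q. (real j + 1/2) * pi / S < q \<and> q < (real j + 1) * pi / S \<and> tan (q * S) / c = - q)"
proof -
  have "(2*j+2) div 2 = j+1" by simp
  then show ?thesis unfolding qseq_def by (simp add: algebra_simps)
qed

lemma psi_mono:
  fixes P t1 t2 :: real
  assumes "0 \<le> t1" "t1 < t2" "0 \<le> P"
  shows "(P*pi + arctan t1)*t1 < (P*pi + arctan t2)*t2"
proof -
  have a: "arctan t1 < arctan t2" using assms arctan_monotone by blast
  have b: "0 \<le> arctan t1" using assms(1) arctan_monotone' by fastforce
  have c: "0 \<le> P*pi" using assms by simp
  have "(P*pi + arctan t1)*t1 \<le> (P*pi + arctan t2)*t1"
    using a assms(1) by (intro mult_right_mono) auto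
  also have "\<dots> < (P*pi + arctan t2)*t2"
    using a b c assms by (intro mult_strict_left_mono) linarith+
  finally show ?thesis .
qed

lemma psi_inj:
  fixes P t1 t2 :: real
  assumes "0 \<le> t1" "0 \<le> t2" "0 \<le> P" "(P*pi + arctan t1)*t1 = (P*pi + arctan t2)*t2"
  shows "t1 = t2"
  using psi_mono[of t1 t2 P] psi_mono[of t2 t1 P] assms by (cases "t1 < t2"; cases "t2 < t1") auto

lemma qodd:
  assumes S: "S > 0" and c: "c > 0"
  shows "\<exists>t>0. (real j*pi + arctan t)*t = S/c \<and> qseq S c (2*j+1) = (real j*pi + arctan t)/S"
proof -
  define T where "T = 1 + 4*S/(c*pi)"
  have T1: "T \<ge> 1" using S c by (simp add: T_def)
  have "arctan T \<ge> pi/4" using arctan_monotone'[OF T1] arctan_one by simp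
  moreover have "0 \<le> real j * pi" by simp
  ultimately have "(real j*pi + arctan T)*T \<ge> pi/4 * T"
    using T1 by (intro mult_right_mono) linarith+
  moreover have "pi/4*T \<ge> S/c" using S c by (simp add: T_def field_simps)
  ultimately have hT: "(real j*pi + arctan T)*T \<ge> S/c" by linarith
  have "\<exists>t. 0 \<le> t \<and> t \<le> T \<and> (real j*pi + arctan t)*t = S/c"
    apply (rule IVT)
    using hT T1 S c by (auto intro!: continuous_intros)
  then obtain t where t: "0 \<le> t" "(real j*pi + arctan t)*t = S/c" by blast
  have tpos: "t > 0" using t S c by (cases "t = 0") auto
  define Q where "Q q \<longleftrightarrow> real j * pi / S < q \<and> q < (real j + 1/2) * pi / S \<and> q * tan (q * S) = 1 / c" for q
  have tanq: "tan ((real j*pi + arctan t)/S * S) = t"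
    using S tan_periodic_nat[of "arctan t" j] by (simp add: tan_arctan add.commute)
  have Q1: "Q ((real j*pi + arctan t)/S)"
    unfolding Q_def tanq
    using S c t tpos arctan_ubound[of t] by (auto simp: field_simps)
  have Qu: "q = (real j*pi + arctan t)/S" if "Q q" for q
  proof -
    define u where "u = q*S - real j * pi"
    have u: "0 < u" "u < pi/2" using that S unfolding Q_def u_def by (auto simp: field_simps)
    have tq: "tan (q*S) = tan u"
      using tan_periodic_nat[of u j] unfolding u_def by simp
    have tu: "tan u > 0" using u by (simp add: tan_gt_zero)
    have au: "arctan (tan u) = u" using u by (intro arctan_tan) auto
    have qe: "q = (real j*pi + arctan (tan u))/S" using au S unfolding u_def by (simp add: field_simps)
    have "q * tan u = 1/c" using that tq unfolding Q_def by simp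
    hence "(real j*pi + arctan (tan u))*tan u = S/c" using qe S by (simp add: field_simps)
    hence "tan u = t" using psi_inj[of "tan u" t "real j"] t tu by simp
    with qe show ?thesis by simp
  qed
  have "qseq S c (2*j+1) = (real j*pi + arctan t)/S"
    unfolding qseq_odd_eq Q_def[symmetric]
    by (rule the1_equality) (use Q1 Qu in blast)+
  with t tpos show ?thesis by blast
qed

lemma phi_inj:
  fixes t1 t2 K A :: real
  assumes "A > 0" "t1 - A*(K - arctan t1) = t2 - A*(K - arctan t2)"
  shows "t1 = t2"
proof (rule ccontr)
  assume "t1 \<noteq> t2"
  then consider "t1 < t2" | "t2 < t1" by linarith
  then show False
  proof cases
    case 1
    then have "arctan t1 < arctan t2" by (rule arctan_monotone)
    then have "A * arctan t1 < A * arctan t2" using assms by simp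
    moreover have "t1 + A*arctan t1 = t2 + A*arctan t2" using assms(2) by (simp add: algebra_simps)
    ultimately show False using 1 by linarith
  next
    case 2
    then have "arctan t2 < arctan t1" by (rule arctan_monotone)
    then have "A * arctan t2 < A * arctan t1" using assms by simp
    moreover have "t1 + A*arctan t1 = t2 + A*arctan t2" using assms(2) by (simp add: algebra_simps)
    ultimately show False using 2 by linarith
  qed
qed

lemma qeven:
  assumes S: "S > 0" and c: "c > 0"
  shows "\<exists>t>0. t = c/S*((real j+1)*pi - arctan t) \<and> qseq S c (2*j+2) = ((real j+1)*pi - arctan t)/S"
proof -
  define T where "T = c/S*(real j+1)*pi"
  have T0: "T \<ge> 0" using S c by (simp add: T_def)
  have "arctan T \<ge> 0" using T0 arctan_monotone'[OF T0] by simp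
  hence hT: "T - c/S*((real j+1)*pi - arctan T) \<ge> 0" using S c by (simp add: T_def algebra_simps)
  have h0: "0 - c/S*((real j+1)*pi - arctan 0) \<le> 0" using S c by simp
  have "\<exists>t. 0 \<le> t \<and> t \<le> T \<and> t - c/S*((real j+1)*pi - arctan t) = 0"
    apply (rule IVT[OF h0 hT T0])
    using S by (auto intro!: continuous_intros)
  then obtain t where t: "0 \<le> t" "t - c/S*((real j+1)*pi - arctan t) = 0" by blast
  have tpos: "t > 0" using t S c by (cases "t = 0") auto
  define Q where "Q q \<longleftrightarrow> (real j + 1/2) * pi / S < q \<and> q < (real j + 1) * pi / S \<and> tan (q * S) / c = - q" for q
  have tanq: "tan (((real j+1)*pi - arctan t)/S * S) = - t"
  proof -
    have "((real j+1)*pi - arctan t)/S * S = - arctan t + real (Suc j) * pi" using S by simp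
    then show ?thesis by (simp only: tan_periodic_nat tan_minus tan_arctan)
  qed
  have Q1: "Q (((real j+1)*pi - arctan t)/S)"
    unfolding Q_def tanq
    using S c t tpos arctan_ubound[of t] arctan_monotone[of 0 t] by (auto simp: field_simps)
  have Qu: "q = ((real j+1)*pi - arctan t)/S" if "Q q" for q
  proof -
    define v where "v = (real j + 1) * pi - q*S"
    have v: "0 < v" "v < pi/2" using that S unfolding Q_def v_def by (auto simp: field_simps)
    have "q*S = - v + real (Suc j) * pi" unfolding v_def by simp
    hence tq: "tan (q*S) = - tan v" by (simp only: tan_periodic_nat tan_minus)
    have av: "arctan (tan v) = v" using v by (intro arctan_tan) auto
    have qe: "q = ((real j+1)*pi - arctan (tan v))/S" using av S unfolding v_def by (simp add: field_simps)
    have "tan v = c * q" using that tq c unfolding Q_def by (simp add: field_simps)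
    hence "tan v - c/S*((real j+1)*pi - arctan (tan v)) = 0" using qe S by (simp add: field_simps)
    hence "tan v = t" using phi_inj[of "c/S" "tan v" "(real j+1)*pi" t] t S c by simp
    with qe show ?thesis by simp
  qed
  have "qseq S c (2*j+2) = ((real j+1)*pi - arctan t)/S"
    unfolding qseq_even_eq Q_def[symmetric]
    by (rule the1_equality) (use Q1 Qu in blast)+
  with t tpos show ?thesis by auto
qed

definition qgap :: "real \<Rightarrow> real \<Rightarrow> real" where
  "qgap S c = min (min ((pi/2 - arctan (1 + 4*S/(c*pi)))/S) (arctan (c*pi/(2*S))/S)) (qseq S c 1)"

lemma qseq0: "qseq S c 0 = 0" by (simp add: qseq_def)

lemma qodd_bounds:
  assumes S: "S > 0" and c: "c > 0"
  shows "real j*pi/S < qseq S c (2*j+1) \<and> qseq S c (2*j+1) \<le> (real j*pi + arctan (1 + 4*S/(c*pi)))/S"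
proof -
  obtain t where t: "t>0" "(real j*pi + arctan t)*t = S/c" "qseq S c (2*j+1) = (real j*pi + arctan t)/S"
    using qodd[OF S c] by blast
  define T0 where "T0 = 1 + 4*S/(c*pi)"
  have "t < T0"
  proof (rule ccontr)
    assume "\<not> t < T0"
    hence tT: "t \<ge> T0" by simp
    have T1: "T0 \<ge> 1" using S c by (simp add: T0_def)
    have "arctan t \<ge> pi/4" using arctan_monotone'[of 1 t] tT T1 arctan_one by simp
    moreover have "0 \<le> real j * pi" by simp
    ultimately have "(real j*pi + arctan t)*t \<ge> pi/4 * t"
      using t by (intro mult_right_mono) linarith+
    moreover have "pi/4*t \<ge> pi/4*T0" using tT by simp
    moreover have "pi/4*T0 > S/c" using S c by (simp add: T0_def field_simps)
    ultimately show False using t by linarith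
  qed
  hence "arctan t \<le> arctan T0" by (simp add: arctan_le_iff)
  moreover have "arctan t > 0" using t arctan_monotone[of 0 t] by simp
  ultimately show ?thesis using t S unfolding T0_def by (auto simp: field_simps)
qed

lemma qeven_bounds:
  assumes S: "S > 0" and c: "c > 0"
  shows "(real j + 1/2)*pi/S < qseq S c (2*j+2) \<and> qseq S c (2*j+2) \<le> ((real j+1)*pi - arctan (c*pi/(2*S)))/S"
proof -
  obtain t where t: "t>0" "t = c/S*((real j+1)*pi - arctan t)" "qseq S c (2*j+2) = ((real j+1)*pi - arctan t)/S"
    using qeven[OF S c] by blast
  have e1: "(real j+1)*pi = real j*pi + pi" by (simp add: algebra_simps)
  have e2: "real j * pi \<ge> 0" by simp
  have X: "(real j+1)*pi - arctan t \<ge> pi/2" using arctan_ubound[of t] e1 e2 by linarith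
  have "c/S*(pi/2) \<le> c/S*((real j+1)*pi - arctan t)" using X S c by (intro mult_left_mono) auto
  hence "t \<ge> c/S*(pi/2)" using t(2) by linarith
  hence "arctan t \<ge> arctan (c*pi/(2*S))" by (simp add: arctan_le_iff)
  moreover have "arctan t < pi/2" by (rule arctan_ubound)
  ultimately show ?thesis using t S by (auto simp: field_simps)
qed

lemma qseq1_pos: assumes "S > 0" "c > 0" shows "qseq S c 1 > 0"
  using qodd_bounds[OF assms, of 0] by simp

lemma qgap_pos: assumes S: "S > 0" and c: "c > 0" shows "qgap S c > 0"
proof -
  have "arctan (1 + 4*S/(c*pi)) < pi/2" by (rule arctan_ubound)
  moreover have "arctan (c*pi/(2*S)) > 0" using S c arctan_monotone[of 0 "c*pi/(2*S)"] by simp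
  ultimately show ?thesis using qseq1_pos[OF assms] S unfolding qgap_def by auto
qed

lemma qseq_step: assumes S: "S > 0" and c: "c > 0" shows "qseq S c (Suc m) \<ge> qseq S c m + qgap S c"
proof -
  consider "m = 0" | j where "m = 2*j+1" | j where "m = 2*j+2"
  proof -
    have "m = 0 \<or> (\<exists>j. m = 2*j+1) \<or> (\<exists>j. m = 2*j+2)" by presburger
    then show ?thesis using that by blast
  qed
  then show ?thesis
  proof cases
    case 1
    then show ?thesis by (simp add: qseq0 qgap_def)
  next
    case (2 j)
    have sm: "Suc m = 2*j+2" using 2 by simp
    have a: "qgap S c \<le> (pi/2 - arctan (1 + 4*S/(c*pi)))/S" by (simp add: qgap_def)
    have b: "(pi/2 - arctan (1 + 4*S/(c*pi)))/S = (real j + 1/2)*pi/S - (real j*pi + arctan (1 + 4*S/(c*pi)))/S"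
      using S by (simp add: field_simps)
    show ?thesis using sm 2 qodd_bounds[OF S c, of j] qeven_bounds[OF S c, of j] a b by simp
  next
    case (3 j)
    have sm: "Suc m = 2*(j+1)+1" using 3 by simp
    have a: "qgap S c \<le> arctan (c*pi/(2*S))/S" by (simp add: qgap_def)
    have b: "arctan (c*pi/(2*S))/S = real (j+1)*pi/S - ((real j+1)*pi - arctan (c*pi/(2*S)))/S"
      using S by (simp add: field_simps)
    show ?thesis using sm 3 qodd_bounds[OF S c, of "j+1"] qeven_bounds[OF S c, of j] a b by simp
  qed
qed

lemma qseq_nonneg: assumes S: "S > 0" and c: "c > 0" shows "qseq S c m \<ge> 0"
proof (induction m)
  case 0 then show ?case by (simp add: qseq0)
next
  case (Suc m) then show ?case using qseq_step[OF S c, of m] qgap_pos[OF S c] by linarith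
qed

lemma qseq_le: assumes S: "S > 0" and c: "c > 0" shows "qseq S c m \<le> (real m + 1)*pi/S"
proof -
  consider "m = 0" | j where "m = 2*j+1" | j where "m = 2*j+2"
  proof -
    have "m = 0 \<or> (\<exists>j. m = 2*j+1) \<or> (\<exists>j. m = 2*j+2)" by presburger
    then show ?thesis using that by blast
  qed
  then show ?thesis
  proof cases
    case 1 then show ?thesis using S by (simp add: qseq0)
  next
    case (2 j)
    have "arctan (1 + 4*S/(c*pi)) < pi/2" by (rule arctan_ubound)
    moreover have "real j * pi \<ge> 0" by simp
    moreover have "(real m + 1)*pi = 2 * (real j * pi) + 2*pi" using 2 by (simp add: algebra_simps)
    ultimately have "(real j*pi + arctan (1 + 4*S/(c*pi))) \<le> (real m + 1)*pi"
      using pi_gt_zero by linarith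
    hence "(real j*pi + arctan (1 + 4*S/(c*pi)))/S \<le> (real m + 1)*pi/S"
      using S by (simp add: divide_right_mono)
    then show ?thesis using qodd_bounds[OF S c, of j] 2 by simp
  next
    case (3 j)
    have "arctan (c*pi/(2*S)) > 0" using S c arctan_monotone[of 0 "c*pi/(2*S)"] by simp
    moreover have "real j * pi \<ge> 0" by simp
    moreover have "(real m + 1)*pi = 2 * (real j * pi) + 3*pi" using 3 by (simp add: algebra_simps)
    ultimately have "((real j+1)*pi - arctan (c*pi/(2*S))) \<le> (real m + 1)*pi"
      using pi_gt_zero by (simp add: algebra_simps)
    hence "((real j+1)*pi - arctan (c*pi/(2*S)))/S \<le> (real m + 1)*pi/S"
      using S by (simp add: divide_right_mono)
    then show ?thesis using qeven_bounds[OF S c, of j] 3 by simp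
  qed
qed

lemma qseq_mono_gap: assumes S: "S > 0" and c: "c > 0"
  shows "qseq S c (m + k) \<ge> qseq S c m + real k * qgap S c"
proof (induction k)
  case 0 then show ?case by simp
next
  case (Suc k) then show ?case using qseq_step[OF S c, of "m+k"] by (simp add: algebra_simps)
qed

lemma qsep: assumes S: "S > 0" and c: "c > 0" and "m \<noteq> m'"
  shows "\<bar>(qseq S c m)\<^sup>2 - (qseq S c m')\<^sup>2\<bar> \<ge> (qgap S c)\<^sup>2"
proof -
  have key: "(qseq S c b)\<^sup>2 - (qseq S c a)\<^sup>2 \<ge> (qgap S c)\<^sup>2" if "a < b" for a b
  proof -
    obtain k where k: "b = a + Suc k" using \<open>a < b\<close> less_iff_Suc_add by (metis add.commute add_Suc)
    have g: "qgap S c > 0" by (rule qgap_pos[OF S c])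
    have h1: "qseq S c b \<ge> qseq S c a + real (Suc k) * qgap S c" using qseq_mono_gap[OF S c, of a "Suc k"] k by simp
    have "real (Suc k) * qgap S c \<ge> qgap S c" using g by simp
    hence h2: "qseq S c b - qseq S c a \<ge> qgap S c" using h1 by linarith
    have h3: "qseq S c b + qseq S c a \<ge> qgap S c" using h2 qseq_nonneg[OF S c, of a] by linarith
    have "(qseq S c b)\<^sup>2 - (qseq S c a)\<^sup>2 = (qseq S c b - qseq S c a)*(qseq S c b + qseq S c a)"
      by (simp add: power2_eq_square algebra_simps)
    also have "\<dots> \<ge> qgap S c * qgap S c" using h2 h3 g by (intro mult_mono) auto
    finally show ?thesis by (simp add: power2_eq_square)
  qed
  show ?thesis
  proof (cases "m < m'")
    case True then show ?thesis using key[OF True] by linarith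
  next
    case False then have "m' < m" using assms(3) by linarith
    then show ?thesis using key[of m' m] by linarith
  qed
qed




coinductive smooth :: "(real \<Rightarrow> real) \<Rightarrow> bool" where
  smoothI: "(\<And>x. (f has_real_derivative f' x) (at x)) \<Longrightarrow> smooth f' \<Longrightarrow> smooth f"

lemma smooth_coI:
  assumes "X h" "\<And>h. X h \<Longrightarrow> \<exists>h'. (\<forall>x. (h has_real_derivative h' x) (at x)) \<and> X h'"
  shows "smooth h"
  using assms(1) by (rule smooth.coinduct) (use assms(2) in blast)

lemma smooth_deriv:
  assumes "smooth f"
  shows "(f has_real_derivative deriv f x) (at x)" "smooth (deriv f)"
proof -
  from assms obtain f' where f': "\<And>x. (f has_real_derivative f' x) (at x)" "smooth f'"
    by (cases rule: smooth.cases) auto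
  have "deriv f = f'" using f'(1) by (intro ext DERIV_imp_deriv) auto
  then show "(f has_real_derivative deriv f x) (at x)" "smooth (deriv f)" using f' by auto
qed

lemma smooth_const: "smooth (\<lambda>x. a)"
  by (rule smooth_coI[where X="\<lambda>f. \<exists>a. f = (\<lambda>x. a)"]) (auto intro!: exI[of _ "\<lambda>x. 0"])

definition sp :: "((real \<Rightarrow> real) \<times> (real \<Rightarrow> real)) list \<Rightarrow> real \<Rightarrow> real" where
  "sp L x = (\<Sum>(f,g)\<leftarrow>L. f x * g x)"

lemma sp_deriv:
  assumes "\<forall>(f,g)\<in>set L. smooth f \<and> smooth g"
  shows "(sp L has_real_derivative sp (concat (map (\<lambda>(f,g). [(deriv f, g), (f, deriv g)]) L)) x) (at x)"
  using assms
proof (induction L)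
  case Nil then show ?case by (simp add: sp_def)
next
  case (Cons a L)
  obtain f g where a: "a = (f,g)" by force
  have sf: "smooth f" "smooth g" using Cons a by auto
  have "sp (a # L) = (\<lambda>x. f x * g x + sp L x)" using a by (auto simp: sp_def)
  moreover have "sp (concat (map (\<lambda>(f,g). [(deriv f, g), (f, deriv g)]) (a#L))) x =
     deriv f x * g x + f x * deriv g x + sp (concat (map (\<lambda>(f,g). [(deriv f, g), (f, deriv g)]) L)) x"
    using a by (simp add: sp_def)
  moreover have "((\<lambda>x. f x * g x + sp L x) has_real_derivative
       deriv f x * g x + f x * deriv g x + sp (concat (map (\<lambda>(f,g). [(deriv f, g), (f, deriv g)]) L)) x) (at x)"
    using Cons smooth_deriv(1)[OF sf(1)] smooth_deriv(1)[OF sf(2)]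
    by (auto intro!: derivative_eq_intros)
  ultimately show ?case by simp
qed

lemma smooth_sp:
  assumes "\<forall>(f,g)\<in>set L. smooth f \<and> smooth g"
  shows "smooth (sp L)"
proof (rule smooth_coI[where X="\<lambda>h. \<exists>L. h = sp L \<and> (\<forall>(f,g)\<in>set L. smooth f \<and> smooth g)"])
  show "\<exists>La. sp L = sp La \<and> (\<forall>(f,g)\<in>set La. smooth f \<and> smooth g)" using assms by blast
next
  fix h assume "\<exists>L. h = sp L \<and> (\<forall>(f,g)\<in>set L. smooth f \<and> smooth g)"
  then obtain L where L: "h = sp L" "\<forall>(f,g)\<in>set L. smooth f \<and> smooth g" by blast
  let ?L' = "concat (map (\<lambda>(f,g). [(deriv f, g), (f, deriv g)]) L)"
  have "\<forall>(f,g)\<in>set ?L'. smooth f \<and> smooth g" using L(2) smooth_deriv(2) by fastforce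
  then show "\<exists>h'. (\<forall>x. (h has_real_derivative h' x) (at x)) \<and> (\<exists>L. h' = sp L \<and> (\<forall>(f,g)\<in>set L. smooth f \<and> smooth g))"
  proof (intro exI[of _ "sp ?L'"] conjI allI)
    fix x show "(h has_real_derivative sp ?L' x) (at x)" using L sp_deriv[OF L(2)] by simp
  next
    show "\<exists>L. sp ?L' = sp L \<and> (\<forall>(f,g)\<in>set L. smooth f \<and> smooth g)"
      using \<open>\<forall>(f,g)\<in>set ?L'. smooth f \<and> smooth g\<close> by blast
  qed
qed

lemma smooth_mult: "smooth f \<Longrightarrow> smooth g \<Longrightarrow> smooth (\<lambda>x. f x * g x)"
proof -
  assume a: "smooth f" "smooth g"
  have "sp [(f,g)] = (\<lambda>x. f x * g x)" by (simp add: sp_def fun_eq_iff)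
  then show ?thesis using smooth_sp[of "[(f,g)]"] a by simp
qed

lemma smooth_add: "smooth f \<Longrightarrow> smooth g \<Longrightarrow> smooth (\<lambda>x. f x + g x)"
proof -
  assume a: "smooth f" "smooth g"
  have "sp [(f,\<lambda>x. 1),(g,\<lambda>x. 1)] = (\<lambda>x. f x + g x)" by (simp add: sp_def fun_eq_iff)
  then show ?thesis using smooth_sp[of "[(f,\<lambda>x. 1),(g,\<lambda>x. 1)]"] a smooth_const by simp
qed

definition cp :: "(real \<Rightarrow> real) \<Rightarrow> ((real \<Rightarrow> real) \<times> (real \<Rightarrow> real)) list \<Rightarrow> real \<Rightarrow> real" where
  "cp w L x = (\<Sum>(k,p)\<leftarrow>L. k (w x) * p x)"

lemma cp_deriv:
  assumes "smooth w" "\<forall>(f,g)\<in>set L. smooth f \<and> smooth g"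
  shows "(cp w L has_real_derivative cp w (concat (map (\<lambda>(k,p). [(deriv k, \<lambda>x. deriv w x * p x), (k, deriv p)]) L)) x) (at x)"
  using assms(2)
proof (induction L)
  case Nil then show ?case by (simp add: cp_def)
next
  case (Cons a L)
  obtain f g where a: "a = (f,g)" by force
  have sf: "smooth f" "smooth g" using Cons a by auto
  have "cp w (a # L) = (\<lambda>x. f (w x) * g x + cp w L x)" using a by (auto simp: cp_def)
  moreover have "cp w (concat (map (\<lambda>(k,p). [(deriv k, \<lambda>x. deriv w x * p x), (k, deriv p)]) (a#L))) x =
     deriv f (w x) * (deriv w x * g x) + f (w x) * deriv g x + cp w (concat (map (\<lambda>(k,p). [(deriv k, \<lambda>x. deriv w x * p x), (k, deriv p)]) L)) x"
    using a by (simp add: cp_def)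
  moreover have "((\<lambda>x. f (w x) * g x + cp w L x) has_real_derivative
       deriv f (w x) * (deriv w x * g x) + f (w x) * deriv g x + cp w (concat (map (\<lambda>(k,p). [(deriv k, \<lambda>x. deriv w x * p x), (k, deriv p)]) L)) x) (at x)"
  proof -
    have d1: "((\<lambda>x. f (w x)) has_real_derivative deriv f (w x) * deriv w x) (at x)"
      using DERIV_chain2[OF smooth_deriv(1)[OF sf(1)] smooth_deriv(1)[OF assms(1)]] .
    show ?thesis using Cons d1 smooth_deriv(1)[OF sf(2)]
      by (auto intro!: derivative_eq_intros simp: algebra_simps)
  qed
  ultimately show ?case by simp
qed

lemma smooth_cp:
  assumes "smooth w" "\<forall>(f,g)\<in>set L. smooth f \<and> smooth g"
  shows "smooth (cp w L)"
proof (rule smooth_coI[where X="\<lambda>h. \<exists>L. h = cp w L \<and> (\<forall>(f,g)\<in>set L. smooth f \<and> smooth g)"])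
  show "\<exists>La. cp w L = cp w La \<and> (\<forall>(f,g)\<in>set La. smooth f \<and> smooth g)" using assms by blast
next
  fix h assume "\<exists>L. h = cp w L \<and> (\<forall>(f,g)\<in>set L. smooth f \<and> smooth g)"
  then obtain L where L: "h = cp w L" "\<forall>(f,g)\<in>set L. smooth f \<and> smooth g" by blast
  let ?L' = "concat (map (\<lambda>(k,p). [(deriv k, \<lambda>x. deriv w x * p x), (k, deriv p)]) L)"
  have "\<forall>(f,g)\<in>set ?L'. smooth f \<and> smooth g"
    using L(2) smooth_deriv(2) smooth_mult[OF smooth_deriv(2)[OF assms(1)]] by fastforce
  then show "\<exists>h'. (\<forall>x. (h has_real_derivative h' x) (at x)) \<and> (\<exists>L. h' = cp w L \<and> (\<forall>(f,g)\<in>set L. smooth f \<and> smooth g))"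
  proof (intro exI[of _ "cp w ?L'"] conjI allI)
    fix x show "(h has_real_derivative cp w ?L' x) (at x)" using L cp_deriv[OF assms(1) L(2)] by simp
  next
    show "\<exists>L. cp w ?L' = cp w L \<and> (\<forall>(f,g)\<in>set L. smooth f \<and> smooth g)"
      using \<open>\<forall>(f,g)\<in>set ?L'. smooth f \<and> smooth g\<close> by blast
  qed
qed

lemma smooth_comp: "smooth k \<Longrightarrow> smooth w \<Longrightarrow> smooth (\<lambda>x. k (w x))"
proof -
  assume a: "smooth k" "smooth w"
  have "cp w [(k, \<lambda>x. 1)] = (\<lambda>x. k (w x))" by (simp add: cp_def fun_eq_iff)
  then show ?thesis using smooth_cp[of w "[(k, \<lambda>x. 1)]"] a smooth_const by simp
qed

lemma smooth_id: "smooth (\<lambda>x. x)"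
  by (rule smoothI[of _ "\<lambda>x. 1"]) (auto intro!: derivative_eq_intros smooth_const)

lemma poly_exp_lim: "((\<lambda>y. poly P y / exp y) \<longlongrightarrow> (0::real)) at_top"
proof -
  have "((\<lambda>y. \<Sum>i\<le>degree P. coeff P i * (y ^ i / exp y)) \<longlongrightarrow> (\<Sum>i\<le>degree P. coeff P i * 0)) at_top"
    by (intro tendsto_sum tendsto_mult tendsto_const tendsto_power_div_exp_0)
  moreover have "(\<lambda>y. \<Sum>i\<le>degree P. coeff P i * (y ^ i / exp y)) = (\<lambda>y. poly P y / exp y)"
    by (auto simp: poly_altdef sum_divide_distrib fun_eq_iff)
  ultimately show ?thesis by simp
qed

definition hfun :: "real poly \<Rightarrow> real \<Rightarrow> real" where
  "hfun P t = (if t \<le> 0 then 0 else poly P (1/t) * exp (-1/t))"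

definition hQ :: "real poly \<Rightarrow> real poly" where
  "hQ P = [:0,0,1:] * (P - pderiv P)"

lemma hfun_deriv: "(hfun P has_real_derivative hfun (hQ P) t) (at t)"
proof -
  consider "t < 0" | "t = 0" | "t > 0" by linarith
  then show ?thesis
  proof cases
    case 1
    have "((\<lambda>x. 0) has_real_derivative hfun (hQ P) t) (at t)" using 1 by (simp add: hfun_def)
    then show ?thesis
      by (rule has_field_derivative_transform_within_open[where S="{..<0}"]) (use 1 in \<open>auto simp: hfun_def\<close>)
  next
    case 3
    have d: "((\<lambda>x. poly P (1/x) * exp (-1/x)) has_real_derivative
        poly (pderiv P) (1/t) * (-1/t^2) * exp (-1/t) + poly P (1/t) * (exp (-1/t) * (1/t^2))) (at t)"
      using 3 by (auto intro!: derivative_eq_intros DERIV_chain2[OF poly_DERIV] simp: power2_eq_square field_simps)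
    have "poly (pderiv P) (1/t) * (-1/t^2) * exp (-1/t) + poly P (1/t) * (exp (-1/t) * (1/t^2)) = hfun (hQ P) t"
      using 3 by (simp add: hfun_def hQ_def algebra_simps power2_eq_square)
    with d have "((\<lambda>x. poly P (1/x) * exp (-1/x)) has_real_derivative hfun (hQ P) t) (at t)" by simp
    then show ?thesis
      by (rule has_field_derivative_transform_within_open[where S="{0<..}"]) (use 3 in \<open>auto simp: hfun_def\<close>)
  next
    case 2
    have l: "((\<lambda>h. (hfun P (0 + h) - hfun P 0) / h) \<longlongrightarrow> 0) (at_left 0)"
    proof -
      have ev: "eventually (\<lambda>h. (hfun P (0 + h) - hfun P 0) / h = 0) (at_left (0::real))"
        unfolding eventually_at_left_field by (intro exI[of _ "-1"]) (auto simp: hfun_def)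
      show ?thesis using tendsto_cong[OF ev] by simp
    qed
    have r: "((\<lambda>h. (hfun P (0 + h) - hfun P 0) / h) \<longlongrightarrow> 0) (at_right 0)"
    proof -
      have lim: "((\<lambda>y. poly ([:0,1:] * P) y / exp y) \<longlongrightarrow> 0) at_top" by (rule poly_exp_lim)
      have "((\<lambda>h. poly ([:0,1:] * P) (inverse h) / exp (inverse h)) \<longlongrightarrow> 0) (at_right 0)"
        using filterlim_compose[OF lim filterlim_inverse_at_top_right] by (simp add: o_def)
      moreover have "eventually (\<lambda>h. poly ([:0,1:] * P) (inverse h) / exp (inverse h) = (hfun P (0 + h) - hfun P 0) / h) (at_right (0::real))"
        unfolding eventually_at_right_field
        by (intro exI[of _ 1]) (auto simp: hfun_def exp_minus field_simps)
      ultimately show ?thesis by (rule tendsto_cong[THEN iffD1, rotated])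
    qed
    have "((\<lambda>h. (hfun P (0 + h) - hfun P 0) / h) \<longlongrightarrow> 0) (at 0)"
      using l r by (rule filterlim_split_at)
    then have "(hfun P has_real_derivative 0) (at 0)" by (simp add: DERIV_def)
    then show ?thesis using 2 by (simp add: hfun_def)
  qed
qed

lemma smooth_hfun: "smooth (hfun P)"
  by (rule smooth_coI[where X="\<lambda>h. \<exists>P. h = hfun P"]) (use hfun_deriv in blast)+

definition chi :: "real \<Rightarrow> real \<Rightarrow> real" where
  "chi r t = hfun 1 (1 - t^2/r^2) * exp 1"

definition chid :: "real \<Rightarrow> nat \<Rightarrow> real \<Rightarrow> real" where
  "chid r j = (deriv ^^ j) (chi r)"

lemma smooth_chi: "smooth (chi r)"
proof -
  have w: "smooth (\<lambda>t. 1 + (-1/r^2) * (t * t))"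
    by (intro smooth_add smooth_mult smooth_const smooth_id)
  have "smooth (\<lambda>t. hfun 1 (1 + (-1/r^2) * (t * t)) * exp 1)"
    by (intro smooth_mult smooth_comp[OF smooth_hfun w] smooth_const)
  moreover have "(\<lambda>t. hfun 1 (1 + (-1/r^2) * (t * t)) * exp 1) = chi r"
    by (auto simp: chi_def fun_eq_iff power2_eq_square)
  ultimately show ?thesis by simp
qed

lemma smooth_chid: "smooth (chid r j)"
  by (induction j) (auto simp: chid_def smooth_chi smooth_deriv(2))

lemma chid_Suc: "chid r (Suc j) = deriv (chid r j)"
  by (simp add: chid_def)

lemma chid_deriv: "(chid r j has_real_derivative chid r (Suc j) x) (at x)"
  using smooth_deriv(1)[OF smooth_chid[of r j]] by (simp add: chid_Suc)

lemma chid_00: "r \<noteq> 0 \<Longrightarrow> chid r 0 0 = 1"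
  by (simp add: chid_def chi_def hfun_def exp_minus)

lemma chid_zero_gt: assumes r: "r > 0" shows "\<bar>t\<bar> > r \<Longrightarrow> chid r j t = 0"
proof (induction j arbitrary: t)
  case 0
  have "r * r < \<bar>t\<bar> * \<bar>t\<bar>" using 0 r by (intro mult_strict_mono) auto
  hence "t^2 > r^2" by (simp add: power2_eq_square)
  hence "1 - t^2/r^2 \<le> 0" using r by (simp add: field_simps)
  then show ?case by (simp add: chid_def chi_def hfun_def)
next
  case (Suc j)
  have "((\<lambda>x. 0) has_real_derivative 0) (at t)" by simp
  hence "(chid r j has_real_derivative 0) (at t)"
    by (rule has_field_derivative_transform_within_open[where S="{x. \<bar>x\<bar> > r}"])
       (use Suc in \<open>auto intro!: open_Collect_less continuous_intros\<close>)
  then show ?case using DERIV_unique[OF chid_deriv[of r j t]] by simp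
qed

lemma chid_zero: assumes r: "r > 0" and t: "\<bar>t\<bar> \<ge> r" shows "chid r j t = 0"
proof (cases "\<bar>t\<bar> > r")
  case True then show ?thesis using chid_zero_gt[OF r] by blast
next
  case False
  hence tr: "t = r \<or> t = -r" using t by linarith
  have cont: "isCont (chid r j) t" using chid_deriv by (rule DERIV_isCont)
  show ?thesis
  proof (cases "t = r")
    case True
    have l1: "(chid r j \<longlongrightarrow> chid r j t) (at_right t)" using cont by (simp add: isCont_def filterlim_at_split)
    have ev: "eventually (\<lambda>x. chid r j x = 0) (at_right t)"
      unfolding eventually_at_right_field using True r by (intro exI[of _ "r+1"]) (auto intro!: chid_zero_gt)
    have "(chid r j \<longlongrightarrow> 0) (at_right t)" using tendsto_cong[OF ev] by simp
    then show ?thesis using tendsto_unique[OF trivial_limit_at_right_real l1] by simp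
  next
    case False
    hence tm: "t = -r" using tr by simp
    have l1: "(chid r j \<longlongrightarrow> chid r j t) (at_left t)" using cont by (simp add: isCont_def filterlim_at_split)
    have ev: "eventually (\<lambda>x. chid r j x = 0) (at_left t)"
      unfolding eventually_at_left_field using tm r by (intro exI[of _ "-r-1"]) (auto intro!: chid_zero_gt)
    have "(chid r j \<longlongrightarrow> 0) (at_left t)" using tendsto_cong[OF ev] by simp
    then show ?thesis using tendsto_unique[OF trivial_limit_at_left_real l1] by simp
  qed
qed

lemma chid_bounded: assumes r: "r > 0" shows "\<exists>B\<ge>0. \<forall>t. \<bar>chid r j t\<bar> \<le> B"
proof -
  have "continuous_on {-r..r} (chid r j)"
    using chid_deriv by (intro continuous_at_imp_continuous_on) (blast intro: DERIV_isCont)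
  hence "compact (chid r j ` {-r..r})" by (intro compact_continuous_image) auto
  then obtain B where B: "\<forall>x\<in>chid r j ` {-r..r}. norm x \<le> B"
    using compact_imp_bounded bounded_iff by metis
  have "\<bar>chid r j t\<bar> \<le> max B 0" for t
  proof (cases "\<bar>t\<bar> \<ge> r")
    case True then show ?thesis using chid_zero[OF r True] by simp
  next
    case False
    hence "t \<in> {-r..r}" by auto
    then have "\<bar>chid r j t\<bar> \<le> B" using B by auto
    then show ?thesis by linarith
  qed
  then show ?thesis by (intro exI[of _ "max B 0"]) auto
qed




definition kp :: "(nat \<Rightarrow> real) \<Rightarrow> (nat \<Rightarrow> real)" where "kp y = (\<lambda>l. y (Suc l))"
definition sv :: "nat \<Rightarrow> (nat \<Rightarrow> real) \<Rightarrow> real" where "sv n y = (y 0)^2 - sqnorm n (kp y)"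

type_synonym tm = "(nat \<Rightarrow> nat) \<times> nat \<times> nat list"

definition Phi :: "nat \<Rightarrow> real \<Rightarrow> real \<Rightarrow> real \<Rightarrow> ((nat\<Rightarrow>real)\<Rightarrow>complex) \<Rightarrow> tm \<Rightarrow> (nat\<Rightarrow>real) \<Rightarrow> complex" where
 "Phi n r a \<sigma> G t y = (case t of (e,j,\<gamma>) \<Rightarrow> if y \<in> Eucl (Suc n) then
     complex_of_real (mon (Suc n) e y * chid r j (sv n y - a)) * pds \<gamma> G (\<lambda>l. \<sigma> * y (Suc l)) else 0)"

definition evalL :: "nat \<Rightarrow> real \<Rightarrow> real \<Rightarrow> real \<Rightarrow> ((nat\<Rightarrow>real)\<Rightarrow>complex) \<Rightarrow> (real \<times> tm) list \<Rightarrow> (nat\<Rightarrow>real) \<Rightarrow> complex" where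
 "evalL n r a \<sigma> G L y = (\<Sum>(c,t)\<leftarrow>L. complex_of_real c * Phi n r a \<sigma> G t y)"

fun dterm :: "real \<Rightarrow> nat \<Rightarrow> real \<times> tm \<Rightarrow> (real \<times> tm) list" where
 "dterm \<sigma> i (c,(e,j,\<gamma>)) = (case i of
     0 \<Rightarrow> [(c * real (e 0), (e(0 := e 0 - 1), j, \<gamma>)), (2*c, (e(0 := e 0 + 1), Suc j, \<gamma>))]
   | Suc l \<Rightarrow> [(c * real (e i), (e(i := e i - 1), j, \<gamma>)), (-2*c, (e(i := e i + 1), Suc j, \<gamma>)), (c*\<sigma>, (e, j, l#\<gamma>))])"

lemma Eucl_upd: "i < N \<Longrightarrow> y(i := t) \<in> Eucl N \<longleftrightarrow> y \<in> Eucl N"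
  by (auto simp: Eucl_def)

lemma mon_deriv:
  assumes "i < N"
  shows "((\<lambda>t. mon N e (y(i:=t))) has_real_derivative real (e i) * mon N (e(i := e i - 1)) y) (at (y i))"
proof -
  define P where "P = (\<Prod>l\<in>{..<N}-{i}. y l ^ e l)"
  have m: "mon N e (y(i:=t)) = t ^ e i * P" for t
    unfolding mon_def P_def using assms
    by (subst prod.remove[of _ i]) (auto intro!: prod.cong)
  have m2: "mon N (e(i := e i - 1)) y = y i ^ (e i - 1) * P"
    unfolding mon_def P_def using assms
    by (subst prod.remove[of _ i]) (auto intro!: prod.cong)
  have "((\<lambda>t. t ^ e i * P) has_real_derivative real (e i) * y i ^ (e i - 1) * P) (at (y i))"
    by (auto intro!: derivative_eq_intros)
  then show ?thesis unfolding m m2 by (simp add: algebra_simps)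
qed

lemma mon_mult_var:
  assumes "i < N"
  shows "mon N e y * y i = mon N (e(i := e i + 1)) y"
proof -
  define P where "P = (\<Prod>l\<in>{..<N}-{i}. y l ^ e l)"
  have m: "mon N e y = y i ^ e i * P"
    unfolding mon_def P_def using assms
    by (subst prod.remove[of _ i]) (auto intro!: prod.cong)
  have m2: "mon N (e(i := e i + 1)) y = y i ^ (e i + 1) * P"
    unfolding mon_def P_def using assms
    by (subst prod.remove[of _ i]) (auto intro!: prod.cong)
  show ?thesis unfolding m m2 by (simp add: algebra_simps)
qed

lemma sv_deriv:
  assumes "i < Suc n"
  shows "((\<lambda>t. sv n (y(i:=t))) has_real_derivative (if i = 0 then 2 * y 0 else -2 * y i)) (at (y i))"
proof -
  have e: "sv n (y(i:=t)) = (if i = 0 then t else y 0)^2 - (\<Sum>l<n. (if Suc l = i then t else y (Suc l))^2)" for t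
    by (auto simp: sv_def sqnorm_def kp_def intro!: sum.cong)
  have d: "((\<lambda>t. (\<Sum>l<n. (if Suc l = i then t else y (Suc l))^2)) has_real_derivative
           (\<Sum>l<n. (if Suc l = i then 2 * y i else 0))) (at (y i))"
  proof (rule DERIV_sum)
    fix l assume "l \<in> {..<n}"
    show "((\<lambda>t. (if Suc l = i then t else y (Suc l))^2) has_real_derivative (if Suc l = i then 2 * y i else 0)) (at (y i))"
      by (cases "Suc l = i") (auto intro!: derivative_eq_intros)
  qed
  have s: "(\<Sum>l<n. (if Suc l = i then 2 * y i else 0)) = (if i = 0 then 0 else 2 * y i)"
  proof (cases i)
    case 0 then show ?thesis by simp
  next
    case (Suc l0)
    then have "l0 < n" using assms by simp
    then show ?thesis using Suc by (simp add: sum.delta[of "{..<n}" l0 "\<lambda>_. 2 * y (Suc l0)", unfolded eq_commute[of l0]] if_distrib cong: if_cong)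
  qed
  show ?thesis unfolding e
  proof (cases "i = 0")
    case True
    show "((\<lambda>t. (if i = 0 then t else y 0)\<^sup>2 - (\<Sum>l<n. (if Suc l = i then t else y (Suc l))\<^sup>2)) has_real_derivative
      (if i = 0 then 2 * y 0 else - 2 * y i)) (at (y i))"
      using True d s by (auto intro!: derivative_eq_intros)
  next
    case False
    show "((\<lambda>t. (if i = 0 then t else y 0)\<^sup>2 - (\<Sum>l<n. (if Suc l = i then t else y (Suc l))\<^sup>2)) has_real_derivative
      (if i = 0 then 2 * y 0 else - 2 * y i)) (at (y i))"
      using False DERIV_diff[OF DERIV_const d] s by simp
  qed
qed

lemma H_deriv:
  assumes G: "schwartz n G" and y: "y \<in> Eucl (Suc n)" and l: "l < n" and g: "set \<gamma> \<subseteq> {..<n}"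
  shows "((\<lambda>t. pds \<gamma> G (\<lambda>l'. \<sigma> * (y(Suc l:=t)) (Suc l'))) has_vector_derivative
          (\<sigma> *\<^sub>R pds (l#\<gamma>) G (\<lambda>l'. \<sigma> * y (Suc l')))) (at (y (Suc l)))"
proof -
  define x where "x = (\<lambda>l'. \<sigma> * y (Suc l'))"
  have x: "x \<in> Eucl n" using y unfolding x_def Eucl_def by auto
  have eq: "(\<lambda>l'. \<sigma> * (y(Suc l:=t)) (Suc l')) = x(l := \<sigma> * t)" for t
    by (auto simp: x_def fun_eq_iff)
  have diff: "(\<lambda>u. pds \<gamma> G (x(l := u))) differentiable (at (x l))"
    using G g x l unfolding schwartz_def by blast
  have g': "((\<lambda>u. pds \<gamma> G (x(l := u))) has_vector_derivative pds (l#\<gamma>) G x) (at (x l))"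
    using diff unfolding vector_derivative_works by (simp add: pd_def)
  have f': "((\<lambda>t. \<sigma> * t) has_vector_derivative \<sigma>) (at (y (Suc l)))"
    using has_vector_derivative_mult_right[OF has_vector_derivative_id, of \<sigma>] by simp
  have "x l = \<sigma> * y (Suc l)" by (simp add: x_def)
  with g' have g'': "((\<lambda>u. pds \<gamma> G (x(l := u))) has_vector_derivative pds (l#\<gamma>) G x) (at (\<sigma> * y (Suc l)))" by simp
  have "(((\<lambda>u. pds \<gamma> G (x(l := u))) \<circ> (\<lambda>t. \<sigma> * t)) has_vector_derivative (\<sigma> *\<^sub>R pds (l#\<gamma>) G x)) (at (y (Suc l)))"
    by (rule vector_diff_chain_at[OF f' g''])
  then show ?thesis unfolding eq by (simp add: o_def x_def)
qed

lemma Phi_deriv: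
  assumes G: "schwartz n G" and i: "i < Suc n" and g: "set \<gamma> \<subseteq> {..<n}"
  shows "((\<lambda>t. Phi n r a \<sigma> G (e,j,\<gamma>) (y(i:=t))) has_vector_derivative
          evalL n r a \<sigma> G (dterm \<sigma> i (1,(e,j,\<gamma>))) y) (at (y i))"
proof (cases "y \<in> Eucl (Suc n)")
  case False
  have "Phi n r a \<sigma> G (e,j,\<gamma>) (y(i:=t)) = 0" for t using False Eucl_upd[OF i] by (simp add: Phi_def)
  moreover have "evalL n r a \<sigma> G (dterm \<sigma> i (1,(e,j,\<gamma>))) y = 0"
    using False by (cases i) (simp_all add: evalL_def Phi_def)
  ultimately show ?thesis by simp
next
  case True
  note y = True
  define M where "M t = mon (Suc n) e (y(i:=t))" for t
  define X where "X t = chid r j (sv n (y(i:=t)) - a)" for t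
  define H where "H t = pds \<gamma> G (\<lambda>l'. \<sigma> * (y(i:=t)) (Suc l'))" for t
  have ph: "Phi n r a \<sigma> G (e,j,\<gamma>) (y(i:=t)) = complex_of_real (M t * X t) * H t" for t
    using y Eucl_upd[OF i] by (simp add: Phi_def M_def X_def H_def)
  have dM: "(M has_real_derivative real (e i) * mon (Suc n) (e(i := e i - 1)) y) (at (y i))"
    unfolding M_def by (rule mon_deriv[OF i])
  define s' where "s' = (if i = 0 then 2 * y 0 else -2 * y i)"
  have dX: "(X has_real_derivative chid r (Suc j) (sv n y - a) * s') (at (y i))"
  proof -
    have "((\<lambda>t. sv n (y(i:=t)) - a) has_real_derivative s') (at (y i))"
      using sv_deriv[OF i, of y] unfolding s'_def by (auto intro!: derivative_eq_intros)
    from DERIV_chain2[OF chid_deriv this] show ?thesis unfolding X_def by simp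
  qed
  have M0: "M (y i) = mon (Suc n) e y" and X0: "X (y i) = chid r j (sv n y - a)"
     and H0: "H (y i) = pds \<gamma> G (\<lambda>l'. \<sigma> * y (Suc l'))"
    by (simp_all add: M_def X_def H_def)
  have dMX: "((\<lambda>t. complex_of_real (M t * X t)) has_vector_derivative
      complex_of_real (M (y i) * (chid r (Suc j) (sv n y - a) * s') + real (e i) * mon (Suc n) (e(i := e i - 1)) y * X (y i))) (at (y i))"
    by (rule has_vector_derivative_of_real) (use DERIV_mult[OF dM dX] in \<open>simp add: algebra_simps\<close>)
  show ?thesis
  proof (cases i)
    case 0
    have dH: "(H has_vector_derivative 0) (at (y i))" unfolding H_def 0 by simp
    have "((\<lambda>t. complex_of_real (M t * X t) * H t) has_vector_derivative
       complex_of_real (M (y i) * X (y i)) * 0 + complex_of_real (M (y i) * (chid r (Suc j) (sv n y - a) * s') + real (e i) * mon (Suc n) (e(i := e i - 1)) y * X (y i)) * H (y i)) (at (y i))"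
      by (rule has_vector_derivative_mult[OF dMX dH])
    moreover have "complex_of_real (M (y i) * X (y i)) * 0 + complex_of_real (M (y i) * (chid r (Suc j) (sv n y - a) * s') + real (e i) * mon (Suc n) (e(i := e i - 1)) y * X (y i)) * H (y i)
       = evalL n r a \<sigma> G (dterm \<sigma> i (1,(e,j,\<gamma>))) y"
    proof -
      have mm: "mon (Suc n) e y * y 0 = mon (Suc n) (e(0 := e 0 + 1)) y" by (rule mon_mult_var) simp
      hence mm': "complex_of_real (mon (Suc n) (e(0 := Suc (e 0))) y) = complex_of_real (y 0) * complex_of_real (mon (Suc n) e y)"
        by (metis Suc_eq_plus1 mult.commute of_real_mult)
      show ?thesis using y 0 unfolding M0 X0 H0 s'_def
        by (simp add: evalL_def Phi_def algebra_simps mm')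
    qed
    ultimately show ?thesis unfolding ph by simp
  next
    case (Suc l)
    have l: "l < n" using i Suc by simp
    have dH: "(H has_vector_derivative \<sigma> *\<^sub>R pds (l#\<gamma>) G (\<lambda>l'. \<sigma> * y (Suc l'))) (at (y i))"
      unfolding H_def Suc by (rule H_deriv[OF G y l g])
    have "((\<lambda>t. complex_of_real (M t * X t) * H t) has_vector_derivative
       complex_of_real (M (y i) * X (y i)) * (\<sigma> *\<^sub>R pds (l#\<gamma>) G (\<lambda>l'. \<sigma> * y (Suc l'))) + complex_of_real (M (y i) * (chid r (Suc j) (sv n y - a) * s') + real (e i) * mon (Suc n) (e(i := e i - 1)) y * X (y i)) * H (y i)) (at (y i))"
      by (rule has_vector_derivative_mult[OF dMX dH])
    moreover have "complex_of_real (M (y i) * X (y i)) * (\<sigma> *\<^sub>R pds (l#\<gamma>) G (\<lambda>l'. \<sigma> * y (Suc l'))) + complex_of_real (M (y i) * (chid r (Suc j) (sv n y - a) * s') + real (e i) * mon (Suc n) (e(i := e i - 1)) y * X (y i)) * H (y i)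
       = evalL n r a \<sigma> G (dterm \<sigma> i (1,(e,j,\<gamma>))) y"
    proof -
      have mm: "mon (Suc n) e y * y i = mon (Suc n) (e(i := e i + 1)) y" by (rule mon_mult_var[OF i])
      hence mm': "complex_of_real (mon (Suc n) (e(Suc l := Suc (e (Suc l)))) y) = complex_of_real (y (Suc l)) * complex_of_real (mon (Suc n) e y)"
        using Suc by (metis Suc_eq_plus1 mult.commute of_real_mult)
      show ?thesis using y Suc unfolding M0 X0 H0 s'_def
        by (simp add: evalL_def Phi_def algebra_simps mm' scaleR_conv_of_real)
    qed
    ultimately show ?thesis unfolding ph by simp
  qed
qed

definition dL :: "real \<Rightarrow> nat \<Rightarrow> (real \<times> tm) list \<Rightarrow> (real \<times> tm) list" where
  "dL \<sigma> i L = concat (map (dterm \<sigma> i) L)"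

fun DL :: "real \<Rightarrow> nat list \<Rightarrow> (real \<times> tm) list \<Rightarrow> (real \<times> tm) list" where
  "DL \<sigma> [] L = L"
| "DL \<sigma> (i#js) L = dL \<sigma> i (DL \<sigma> js L)"

definition validL :: "nat \<Rightarrow> (real \<times> tm) list \<Rightarrow> bool" where
  "validL n L \<longleftrightarrow> (\<forall>(c,(e,j,\<gamma>))\<in>set L. set \<gamma> \<subseteq> {..<n})"

lemma validL_dL: assumes v: "validL n L" and i: "i < Suc n" shows "validL n (dL \<sigma> i L)"
  unfolding validL_def dL_def
proof (intro ballI)
  fix p assume "p \<in> set (concat (map (dterm \<sigma> i) L))"
  then obtain q where q: "q \<in> set L" "p \<in> set (dterm \<sigma> i q)" by auto
  obtain c e j \<gamma> where qq: "q = (c,(e,j,\<gamma>))" by (cases q) auto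
  have g: "set \<gamma> \<subseteq> {..<n}" using v q(1) qq unfolding validL_def by fastforce
  show "case p of (c,e,j,\<gamma>) \<Rightarrow> set \<gamma> \<subseteq> {..<n}"
  proof (cases i)
    case 0 then show ?thesis using q(2) qq g by auto
  next
    case (Suc l) then show ?thesis using q(2) qq g i by auto
  qed
qed

lemma validL_DL: "validL n L \<Longrightarrow> set \<beta> \<subseteq> {..<Suc n} \<Longrightarrow> validL n (DL \<sigma> \<beta> L)"
  by (induction \<beta>) (auto intro: validL_dL)

lemma evalL_append: "evalL n r a \<sigma> G (L1 @ L2) y = evalL n r a \<sigma> G L1 y + evalL n r a \<sigma> G L2 y"
  by (simp add: evalL_def)

lemma evalL_dterm_scale: "evalL n r a \<sigma> G (dterm \<sigma> i (c,t)) y = complex_of_real c * evalL n r a \<sigma> G (dterm \<sigma> i (1,t)) y"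
  by (cases t; cases i) (simp_all add: evalL_def algebra_simps)


lemma evalL_deriv:
  assumes G: "schwartz n G" and i: "i < Suc n" and v: "validL n L"
  shows "((\<lambda>t. evalL n r a \<sigma> G L (y(i:=t))) has_vector_derivative evalL n r a \<sigma> G (dL \<sigma> i L) y) (at (y i))"
  using v
proof (induction L)
  case Nil then show ?case by (simp add: evalL_def dL_def)
next
  case (Cons p L)
  obtain c e j \<gamma> where p: "p = (c,(e,j,\<gamma>))" by (cases p) auto
  have g: "set \<gamma> \<subseteq> {..<n}" using Cons.prems p by (auto simp: validL_def)
  have v': "validL n L" using Cons.prems by (auto simp: validL_def)
  have e1: "evalL n r a \<sigma> G (p # L) z = complex_of_real c * Phi n r a \<sigma> G (e,j,\<gamma>) z + evalL n r a \<sigma> G L z" for z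
    using p by (simp add: evalL_def)
  have e2: "evalL n r a \<sigma> G (dL \<sigma> i (p # L)) y = complex_of_real c * evalL n r a \<sigma> G (dterm \<sigma> i (1,(e,j,\<gamma>))) y + evalL n r a \<sigma> G (dL \<sigma> i L) y"
  proof -
    have "evalL n r a \<sigma> G (dL \<sigma> i (p # L)) y = evalL n r a \<sigma> G (dterm \<sigma> i (c,(e,j,\<gamma>))) y + evalL n r a \<sigma> G (dL \<sigma> i L) y"
      using p by (simp add: dL_def evalL_append del: dterm.simps)
    also have "evalL n r a \<sigma> G (dterm \<sigma> i (c,(e,j,\<gamma>))) y = complex_of_real c * evalL n r a \<sigma> G (dterm \<sigma> i (1,(e,j,\<gamma>))) y"
      by (rule evalL_dterm_scale)
    finally show ?thesis .
  qed
  show ?case unfolding e1 e2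
    by (intro has_vector_derivative_add has_vector_derivative_mult_right Phi_deriv[OF G i g] Cons.IH v')
qed


lemma pd_evalL:
  assumes G: "schwartz n G" and i: "i < Suc n" and v: "validL n L"
  shows "pd i (evalL n r a \<sigma> G L) = evalL n r a \<sigma> G (dL \<sigma> i L)"
  by (rule ext) (simp add: pd_def vector_derivative_at[OF evalL_deriv[OF G i v]])

lemma pds_evalL:
  assumes G: "schwartz n G" and b: "set \<beta> \<subseteq> {..<Suc n}" and v: "validL n L"
  shows "pds \<beta> (evalL n r a \<sigma> G L) = evalL n r a \<sigma> G (DL \<sigma> \<beta> L)"
  using b
proof (induction \<beta>)
  case Nil then show ?case by simp
next
  case (Cons i js)
  have i: "i < Suc n" and js: "set js \<subseteq> {..<Suc n}" using Cons.prems by auto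
  have "pds (i#js) (evalL n r a \<sigma> G L) = pd i (evalL n r a \<sigma> G (DL \<sigma> js L))"
    using Cons.IH[OF js] by simp
  also have "\<dots> = evalL n r a \<sigma> G (dL \<sigma> i (DL \<sigma> js L))"
    by (rule pd_evalL[OF G i validL_DL[OF v js]])
  finally show ?case by simp
qed

lemma pds_evalL_diff:
  assumes G: "schwartz n G" and b: "set \<beta> \<subseteq> {..<Suc n}" and v: "validL n L" and i: "i < Suc n"
  shows "(\<lambda>t. pds \<beta> (evalL n r a \<sigma> G L) (x(i := t))) differentiable (at (x i))"
  unfolding pds_evalL[OF G b v]
  using evalL_deriv[OF G i validL_DL[OF v b], where y=x and r=r and a=a and \<sigma>=\<sigma>] unfolding differentiable_def has_vector_derivative_def
  by blast

lemma pow_sum_bound: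
  fixes x :: "nat \<Rightarrow> real"
  assumes x: "\<And>l. x l \<ge> 0"
  shows "(1 + (\<Sum>l<n. x l))^N \<le> real (n+1)^N * (1 + (\<Sum>l<n. x l ^ N))"
proof -
  define M where "M = Max (insert 1 (x ` {..<n}))"
  have M1: "1 \<le> M" unfolding M_def by simp
  have Mx: "x l \<le> M" if "l < n" for l unfolding M_def using that by simp
  have "1 + (\<Sum>l<n. x l) \<le> M + (\<Sum>l<n. M)" using M1 Mx by (intro add_mono sum_mono) auto
  also have "\<dots> = real (n+1) * M" by (simp add: algebra_simps)
  finally have s: "1 + (\<Sum>l<n. x l) \<le> real (n+1) * M" .
  have "(1 + (\<Sum>l<n. x l))^N \<le> (real (n+1) * M)^N"
  proof -
    have "0 \<le> sum x {..<n}" using x by (intro sum_nonneg) auto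
    then show ?thesis using s by (intro power_mono) auto
  qed
  also have "\<dots> = real (n+1)^N * M^N" by (simp add: power_mult_distrib)
  also have "M^N \<le> 1 + (\<Sum>l<n. x l ^ N)"
  proof -
    have "M \<in> insert 1 (x ` {..<n})" unfolding M_def by (intro Max_in) auto
    then consider "M = 1" | l where "l < n" "M = x l" by auto
    then show ?thesis
    proof cases
      case 1
      have "0 \<le> (\<Sum>l<n. x l ^ N)" using x by (intro sum_nonneg) auto
      then show ?thesis using 1 by simp
    next
      case 2
      have "x l ^ N \<le> (\<Sum>l<n. x l ^ N)" using 2 x by (intro member_le_sum) auto
      then show ?thesis using 2 by simp
    qed
  qed
  hence "real (n+1)^N * M^N \<le> real (n+1)^N * (1 + (\<Sum>l<n. x l ^ N))" by (intro mult_left_mono) auto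
  finally show ?thesis .
qed

lemma snorm_ge:
  assumes G: "schwartz n G" and x: "x \<in> Eucl n" and g: "set \<gamma> \<subseteq> {..<n}"
  shows "norm (complex_of_real (mon n \<alpha> x) * pds \<gamma> G x) \<le> snorm n \<alpha> \<gamma> G"
proof -
  have "bounded ((\<lambda>x. complex_of_real (mon n \<alpha> x) * pds \<gamma> G x) ` Eucl n)"
    using G g unfolding schwartz_def by blast
  then obtain B where B: "\<forall>z\<in>Eucl n. norm (complex_of_real (mon n \<alpha> z) * pds \<gamma> G z) \<le> B"
    unfolding bounded_iff by auto
  have "bdd_above ((\<lambda>z. norm (complex_of_real (mon n \<alpha> z) * pds \<gamma> G z)) ` Eucl n)"
    using B by (intro bdd_aboveI2) auto
  then show ?thesis unfolding snorm_def using x by (rule cSUP_upper2) auto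
qed

lemma zero_Eucl: "(\<lambda>_. 0) \<in> Eucl n" by (simp add: Eucl_def)

lemma snorm_nonneg:
  assumes G: "schwartz n G" and g: "set \<gamma> \<subseteq> {..<n}"
  shows "0 \<le> snorm n \<alpha> \<gamma> G"
  using snorm_ge[OF G zero_Eucl g] norm_ge_zero order_trans by blast

lemma mon_add: "mon N \<alpha> y * mon N e y = mon N (\<lambda>l. \<alpha> l + e l) y"
  by (simp add: mon_def prod.distrib[symmetric] power_add)

lemma mon_Suc: "mon (Suc n) E y = y 0 ^ E 0 * mon n (\<lambda>l. E (Suc l)) (kp y)"
  unfolding mon_def kp_def by (simp only: prod.lessThan_Suc_shift)

lemma mon_sign: assumes "\<bar>\<sigma>\<bar> = 1" shows "\<bar>mon n \<alpha> (\<lambda>l. \<sigma> * k l)\<bar> = \<bar>mon n \<alpha> k\<bar>"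
  using assms by (simp add: mon_def power_mult_distrib prod.distrib abs_mult abs_prod power_abs)

lemma mon_upd_pow: assumes "l < n" shows "mon n (E(l := E l + 2*N)) k = mon n E k * ((k l)^2)^N"
proof -
  define P where "P = (\<Prod>i\<in>{..<n}-{l}. k i ^ E i)"
  have m: "mon n E k = k l ^ E l * P"
    unfolding mon_def P_def using assms by (subst prod.remove[of _ l]) (auto intro!: prod.cong)
  have m2: "mon n (E(l := E l + 2*N)) k = k l ^ (E l + 2*N) * P"
    unfolding mon_def P_def using assms by (subst prod.remove[of _ l]) (auto intro!: prod.cong)
  show ?thesis unfolding m m2 by (simp only: power_add power_mult) (simp add: algebra_simps)
qed

lemma abs_le_1_sq: "\<bar>t::real\<bar> \<le> 1 + t^2"
proof (cases "\<bar>t\<bar> \<le> 1")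
  case True then show ?thesis by (smt (verit) zero_le_power2)
next
  case False
  then have "\<bar>t\<bar> * 1 \<le> \<bar>t\<bar> * \<bar>t\<bar>" by (intro mult_left_mono) auto
  then show ?thesis by (simp add: power2_eq_square abs_mult_self_eq)
qed

lemma Phi_bound:
  assumes G: "schwartz n G" and g: "set \<gamma> \<subseteq> {..<n}" and y: "y \<in> Eucl (Suc n)"
    and \<sigma>: "\<bar>\<sigma>\<bar> = 1" and r: "r > 0" and B: "\<forall>t. \<bar>chid r j t\<bar> \<le> Bj"
  shows "norm (complex_of_real (mon (Suc n) \<alpha> y) * Phi n r a \<sigma> G (e,j,\<gamma>) y)
     \<le> Bj * ((1 + \<bar>a\<bar> + r) * real (n+1))^(\<alpha> 0 + e 0) *
        (snorm n (\<lambda>l. \<alpha> (Suc l) + e (Suc l)) \<gamma> G +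
         (\<Sum>l<n. snorm n ((\<lambda>l. \<alpha> (Suc l) + e (Suc l))(l := \<alpha> (Suc l) + e (Suc l) + 2*(\<alpha> 0 + e 0))) \<gamma> G))"
proof -
  define N where "N = \<alpha> 0 + e 0"
  define E' where "E' = (\<lambda>l. \<alpha> (Suc l) + e (Suc l))"
  define k where "k = kp y"
  define x where "x = (\<lambda>l. \<sigma> * k l)"
  define P where "P = norm (pds \<gamma> G x)"
  define K where "K = 1 + \<bar>a\<bar> + r"
  define S1 where "S1 = snorm n E' \<gamma> G + (\<Sum>l<n. snorm n (E'(l := E' l + 2*N)) \<gamma> G)"
  have Bj: "Bj \<ge> 0" using B order_trans abs_ge_zero by blast
  have K1: "K \<ge> 1" using r by (simp add: K_def)
  have S1: "S1 \<ge> 0" unfolding S1_def using snorm_nonneg[OF G g] by (intro add_nonneg_nonneg sum_nonneg) auto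
  have x: "x \<in> Eucl n" using y unfolding x_def k_def kp_def Eucl_def by auto
  have xk: "(\<lambda>l. \<sigma> * y (Suc l)) = x" by (simp add: x_def k_def kp_def)
  have sn: "\<bar>mon n \<alpha>' k\<bar> * P \<le> snorm n \<alpha>' \<gamma> G" for \<alpha>'
  proof -
    have "\<bar>mon n \<alpha>' k\<bar> * P = norm (complex_of_real (mon n \<alpha>' x) * pds \<gamma> G x)"
      unfolding P_def x_def using mon_sign[OF \<sigma>] by (simp add: norm_mult)
    also have "\<dots> \<le> snorm n \<alpha>' \<gamma> G" by (rule snorm_ge[OF G x g])
    finally show ?thesis .
  qed
  have lhs: "norm (complex_of_real (mon (Suc n) \<alpha> y) * Phi n r a \<sigma> G (e,j,\<gamma>) y)
      = \<bar>y 0\<bar>^N * \<bar>mon n E' k\<bar> * \<bar>chid r j (sv n y - a)\<bar> * P"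
  proof -
    have "complex_of_real (mon (Suc n) \<alpha> y) * Phi n r a \<sigma> G (e,j,\<gamma>) y
       = complex_of_real (mon (Suc n) \<alpha> y * mon (Suc n) e y * chid r j (sv n y - a)) * pds \<gamma> G x"
      using y xk by (simp add: Phi_def)
    also have "mon (Suc n) \<alpha> y * mon (Suc n) e y = y 0 ^ N * mon n E' k"
      unfolding mon_add by (simp add: mon_Suc N_def E'_def k_def)
    finally show ?thesis by (simp add: norm_mult P_def abs_mult power_abs norm_power)
  qed
  have "norm (complex_of_real (mon (Suc n) \<alpha> y) * Phi n r a \<sigma> G (e,j,\<gamma>) y) \<le> Bj * (K * real (n+1))^N * S1"
  proof (cases "\<bar>sv n y - a\<bar> \<ge> r")
    case True
    then have "chid r j (sv n y - a) = 0" using chid_zero[OF r] by blast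
    then show ?thesis unfolding lhs using Bj S1 K1 by simp
  next
    case False
    define s where "s = sqnorm n k"
    have s0: "s \<ge> 0" unfolding s_def sqnorm_def by (intro sum_nonneg) auto
    have "(y 0)^2 = sv n y + s" by (simp add: sv_def s_def k_def)
    hence "(y 0)^2 \<le> \<bar>a\<bar> + r + s" using False by linarith
    have sK: "1 * s \<le> K * s" by (rule mult_right_mono[OF K1 s0])
    have "\<bar>y 0\<bar> \<le> K * (1 + s)" using abs_le_1_sq[of "y 0"] sK \<open>(y 0)^2 \<le> \<bar>a\<bar> + r + s\<close>
      unfolding K_def by (simp add: algebra_simps)
    hence "\<bar>y 0\<bar>^N \<le> (K * (1 + s))^N" by (rule power_mono) simp
    hence y0: "\<bar>y 0\<bar>^N \<le> K^N * (1 + s)^N" by (simp add: power_mult_distrib)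
    have ps: "(1 + s)^N \<le> real (n+1)^N * (1 + (\<Sum>l<n. ((k l)^2)^N))"
      unfolding s_def sqnorm_def by (rule pow_sum_bound) simp
    have sc: "(\<Sum>l<n. \<bar>mon n (E'(l := E' l + 2*N)) k\<bar> * P) = (\<Sum>l<n. \<bar>mon n E' k\<bar> * ((k l)^2)^N * P)"
    proof (rule sum.cong)
      fix l assume "l \<in> {..<n}"
      then have "mon n (E'(l := E' l + 2*N)) k = mon n E' k * ((k l)^2)^N" by (intro mon_upd_pow) auto
      then show "\<bar>mon n (E'(l := E' l + 2*N)) k\<bar> * P = \<bar>mon n E' k\<bar> * ((k l)^2)^N * P"
        by (simp add: abs_mult)
    qed simp
    have "\<bar>mon n E' k\<bar> * (1 + (\<Sum>l<n. ((k l)^2)^N)) * P = \<bar>mon n E' k\<bar> * P + (\<Sum>l<n. \<bar>mon n (E'(l := E' l + 2*N)) k\<bar> * P)"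
      unfolding sc by (simp add: distrib_left distrib_right sum_distrib_left sum_distrib_right mult.assoc mult.left_commute)
    also have "\<dots> \<le> S1" unfolding S1_def by (intro add_mono sum_mono sn)
    finally have mS: "\<bar>mon n E' k\<bar> * (1 + (\<Sum>l<n. ((k l)^2)^N)) * P \<le> S1" .
    have P0: "P \<ge> 0" by (simp add: P_def)
    have c: "\<bar>chid r j (sv n y - a)\<bar> \<le> Bj" using B by blast
    have "\<bar>y 0\<bar>^N * \<bar>mon n E' k\<bar> * \<bar>chid r j (sv n y - a)\<bar> * P \<le> \<bar>y 0\<bar>^N * \<bar>mon n E' k\<bar> * Bj * P"
      using c P0 by (intro mult_right_mono mult_left_mono) auto
    also have "\<dots> \<le> (K^N * (real (n+1)^N * (1 + (\<Sum>l<n. ((k l)^2)^N)))) * \<bar>mon n E' k\<bar> * Bj * P"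
      using y0 ps P0 Bj K1 by (intro mult_right_mono order_trans[OF y0] mult_left_mono[OF ps]) auto
    also have "\<dots> = Bj * (K * real (n+1))^N * (\<bar>mon n E' k\<bar> * (1 + (\<Sum>l<n. ((k l)^2)^N)) * P)"
      by (simp only: power_mult_distrib) (simp add: algebra_simps)
    also have "\<dots> \<le> Bj * (K * real (n+1))^N * S1"
      using mS Bj K1 by (intro mult_left_mono) auto
    finally show ?thesis unfolding lhs .
  qed
  then show ?thesis unfolding K_def S1_def E'_def N_def .
qed

lemma tnorm_ge:
  assumes F: "ts_space n F" and g: "set \<gamma> \<subseteq> {..<n}"
  shows "real m ^ p * snorm n \<alpha> \<gamma> (F m) \<le> tnorm n (p,\<alpha>,\<gamma>) F"
proof -
  have S: "summable (\<lambda>m. real m ^ p * snorm n \<alpha> \<gamma> (F m))" using F g unfolding ts_space_def by blast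
  have nn: "0 \<le> real m ^ p * snorm n \<alpha> \<gamma> (F m)" for m
    using snorm_nonneg[of n "F m" \<gamma> \<alpha>] F g unfolding ts_space_def by auto
  have "sum (\<lambda>m. real m ^ p * snorm n \<alpha> \<gamma> (F m)) {m} \<le> suminf (\<lambda>m. real m ^ p * snorm n \<alpha> \<gamma> (F m))"
    by (rule sum_le_suminf[OF S]) (auto simp: nn)
  then show ?thesis by (simp add: tnorm_def)
qed

lemma tnorm_nonneg:
  assumes F: "ts_space n F" and g: "set \<gamma> \<subseteq> {..<n}"
  shows "0 \<le> tnorm n (p,\<alpha>,\<gamma>) F"
  using tnorm_ge[OF F g, of 0 p \<alpha>] snorm_nonneg[of n "F 0" \<gamma> \<alpha>] F g
  unfolding ts_space_def by (smt (verit) mult_nonneg_nonneg zero_le_power of_nat_0_le_iff)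

lemma mpow_bound: "(real m + 1)^p \<le> 2^p * (1 + real m ^ p)"
proof (cases "m = 0")
  case True
  have "(1::real) \<le> 2^p" by (rule one_le_power) simp
  then show ?thesis using True by (cases p) auto
next
  case False
  then have "real m + 1 \<le> 2 * real m" by simp
  hence "(real m + 1)^p \<le> (2 * real m)^p" by (rule power_mono) simp
  also have "\<dots> = 2^p * real m ^ p" by (simp add: power_mult_distrib)
  also have "\<dots> \<le> 2^p * (1 + real m ^ p)" by simp
  finally show ?thesis .
qed

definition chB :: "real \<Rightarrow> nat \<Rightarrow> real" where
  "chB r j = (SOME B. B \<ge> 0 \<and> (\<forall>t. \<bar>chid r j t\<bar> \<le> B))"

lemma chB: assumes "r > 0" shows "chB r j \<ge> 0" "\<forall>t. \<bar>chid r j t\<bar> \<le> chB r j"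
proof -
  have "\<exists>B. B \<ge> 0 \<and> (\<forall>t. \<bar>chid r j t\<bar> \<le> B)" using chid_bounded[OF assms] by blast
  from someI_ex[OF this] show "chB r j \<ge> 0" "\<forall>t. \<bar>chid r j t\<bar> \<le> chB r j" unfolding chB_def by auto
qed

definition alist :: "nat \<Rightarrow> (nat \<Rightarrow> nat) \<Rightarrow> (nat \<Rightarrow> nat) \<Rightarrow> (nat \<Rightarrow> nat) list" where
  "alist n \<alpha> e = (\<lambda>l. \<alpha> (Suc l) + e (Suc l)) #
      map (\<lambda>l. (\<lambda>l. \<alpha> (Suc l) + e (Suc l))(l := \<alpha> (Suc l) + e (Suc l) + 2*(\<alpha> 0 + e 0))) [0..<n]"

definition tidx :: "nat \<Rightarrow> (nat \<Rightarrow> nat) \<Rightarrow> real \<times> tm \<Rightarrow> (nat \<times> (nat \<Rightarrow> nat) \<times> nat list) list" where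
  "tidx n \<alpha> t = (case t of (c,(e,j,\<gamma>)) \<Rightarrow>
      concat (map (\<lambda>\<alpha>'. [(0,\<alpha>',\<gamma>),(2*(\<alpha> 0 + e 0),\<alpha>',\<gamma>)]) (alist n \<alpha> e)))"

definition IL :: "nat \<Rightarrow> (nat \<Rightarrow> nat) \<Rightarrow> (real \<times> tm) list \<Rightarrow> (nat \<times> (nat \<Rightarrow> nat) \<times> nat list) set" where
  "IL n \<alpha> L = (\<Union>t\<in>set L. set (tidx n \<alpha> t))"

definition CL :: "nat \<Rightarrow> real \<Rightarrow> real \<Rightarrow> (nat \<Rightarrow> nat) \<Rightarrow> (real \<times> tm) list \<Rightarrow> real" where
  "CL n r A \<alpha> L = (\<Sum>(c,(e,j,\<gamma>))\<leftarrow>L. \<bar>c\<bar> * chB r j * (4*((1+A+r)*real (n+1)))^(\<alpha> 0 + e 0)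
        * real (length (tidx n \<alpha> (c,(e,j,\<gamma>)))))"

lemma IL_finite: "finite (IL n \<alpha> L)" by (simp add: IL_def)

lemma IL_valid: "validL n L \<Longrightarrow> \<forall>(c', \<alpha>', \<beta>') \<in> IL n \<alpha> L. set \<beta>' \<subseteq> {..<n}"
  unfolding IL_def validL_def tidx_def by fastforce

lemma CL_nonneg: "r > 0 \<Longrightarrow> A \<ge> 0 \<Longrightarrow> CL n r A \<alpha> L \<ge> 0"
  unfolding CL_def by (intro sum_list_nonneg) (auto intro!: mult_nonneg_nonneg chB)

lemma sum_list_le_len:
  assumes "\<forall>x\<in>set xs. f x \<le> (T::real)"
  shows "sum_list (map f xs) \<le> real (length xs) * T"
  using assms by (induction xs) (auto simp: algebra_simps)

lemma sum_list_concat_map: "sum_list (map f (concat (map g xs))) = sum_list (map (\<lambda>x. sum_list (map f (g x))) xs)"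
  by (induction xs) auto

lemma S1_alist:
  "snorm n (\<lambda>l. \<alpha> (Suc l) + e (Suc l)) \<gamma> G +
   (\<Sum>l<n. snorm n ((\<lambda>l. \<alpha> (Suc l) + e (Suc l))(l := \<alpha> (Suc l) + e (Suc l) + 2*(\<alpha> 0 + e 0))) \<gamma> G)
   = sum_list (map (\<lambda>\<alpha>'. snorm n \<alpha>' \<gamma> G) (alist n \<alpha> e))"
proof -
  have "(\<Sum>l<n. snorm n ((\<lambda>l. \<alpha> (Suc l) + e (Suc l))(l := \<alpha> (Suc l) + e (Suc l) + 2*(\<alpha> 0 + e 0))) \<gamma> G)
      = sum_list (map (\<lambda>l. snorm n ((\<lambda>l. \<alpha> (Suc l) + e (Suc l))(l := \<alpha> (Suc l) + e (Suc l) + 2*(\<alpha> 0 + e 0))) \<gamma> G) [0..<n])"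
    by (simp add: sum_set_upt_conv_sum_list_nat[symmetric] lessThan_atLeast0)
  then show ?thesis by (simp add: alist_def o_def)
qed

lemma term_bound:
  assumes r: "r > 0" and A: "A \<ge> 0" and g: "set \<gamma> \<subseteq> {..<n}" and \<sigma>: "\<bar>\<sigma>\<bar> = 1"
    and F: "ts_space n F" and y: "y \<in> Eucl (Suc n)" and a: "\<bar>a\<bar> \<le> A * (real m + 1)^2"
    and T: "\<forall>i\<in>set (tidx n \<alpha> (c,(e,j,\<gamma>))). tnorm n i F \<le> T"
  shows "\<bar>c\<bar> * norm (complex_of_real (mon (Suc n) \<alpha> y) * Phi n r a \<sigma> (F m) (e,j,\<gamma>) y)
     \<le> \<bar>c\<bar> * chB r j * (4*((1+A+r)*real (n+1)))^(\<alpha> 0 + e 0) * real (length (tidx n \<alpha> (c,(e,j,\<gamma>)))) * T"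
proof -
  define N where "N = \<alpha> 0 + e 0"
  define W where "W = (1+A+r)*real (n+1)"
  define K where "K = 1 + \<bar>a\<bar> + r"
  have G: "schwartz n (F m)" using F by (simp add: ts_space_def)
  define S1 where "S1 = sum_list (map (\<lambda>\<alpha>'. snorm n \<alpha>' \<gamma> (F m)) (alist n \<alpha> e))"
  have S10: "S1 \<ge> 0" unfolding S1_def using snorm_nonneg[OF G g] by (intro sum_list_nonneg) auto
  have pb: "norm (complex_of_real (mon (Suc n) \<alpha> y) * Phi n r a \<sigma> (F m) (e,j,\<gamma>) y) \<le> chB r j * (K * real (n+1))^N * S1"
    using Phi_bound[OF G g y \<sigma> r chB(2)[OF r], of \<alpha> a e] unfolding S1_alist K_def N_def S1_def .
  define M2 where "M2 = (real m + 1)^2"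
  have m1: "M2 \<ge> 1" unfolding M2_def by simp
  have rr: "r * 1 \<le> r * M2" using m1 r by (intro mult_left_mono) auto
  have "K \<le> 1 + A * M2 + r" using a by (simp add: K_def M2_def)
  also have "\<dots> \<le> (1+A+r) * M2"
    using m1 rr by (simp add: algebra_simps)
  finally have Kb: "K \<le> (1+A+r)*M2" .
  hence "K * real (n+1) \<le> (1+A+r)*M2*real (n+1)" by (rule mult_right_mono) simp
  hence "K * real (n+1) \<le> W * (real m + 1)^2" by (simp add: W_def M2_def algebra_simps)
  hence "(K * real (n+1))^N \<le> (W * (real m + 1)^2)^N"
    using r by (intro power_mono) (auto simp: K_def)
  also have "\<dots> = W^N * (real m + 1)^(2*N)" by (simp add: power_mult_distrib power_mult)
  also have "\<dots> \<le> W^N * (2^(2*N) * (1 + real m ^ (2*N)))"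
    using A r by (intro mult_left_mono mpow_bound) (auto simp: W_def)
  also have "\<dots> = (4*W)^N * (1 + real m ^ (2*N))" by (simp add: power_mult power_mult_distrib)
  finally have KW: "(K * real (n+1))^N \<le> (4*W)^N * (1 + real m ^ (2*N))" .
  have ts: "(1 + real m ^ (2*N)) * S1 \<le> sum_list (map (\<lambda>i. tnorm n i F) (tidx n \<alpha> (c,(e,j,\<gamma>))))"
  proof -
    have "(1 + real m ^ (2*N)) * S1 = sum_list (map (\<lambda>\<alpha>'. real m ^ 0 * snorm n \<alpha>' \<gamma> (F m) + real m ^ (2*N) * snorm n \<alpha>' \<gamma> (F m)) (alist n \<alpha> e))"
      unfolding S1_def by (simp add: sum_list_const_mult[symmetric] distrib_right sum_list_addf)
    also have "\<dots> \<le> sum_list (map (\<lambda>\<alpha>'. tnorm n (0,\<alpha>',\<gamma>) F + tnorm n (2*N,\<alpha>',\<gamma>) F) (alist n \<alpha> e))"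
      by (intro sum_list_mono add_mono tnorm_ge[OF F g])
    also have "\<dots> = sum_list (map (\<lambda>i. tnorm n i F) (tidx n \<alpha> (c,(e,j,\<gamma>))))"
      by (simp add: tidx_def N_def sum_list_concat_map)
    finally show ?thesis .
  qed
  have "sum_list (map (\<lambda>i. tnorm n i F) (tidx n \<alpha> (c,(e,j,\<gamma>)))) \<le> real (length (tidx n \<alpha> (c,(e,j,\<gamma>)))) * T"
    by (rule sum_list_le_len) (use T in blast)
  with ts have ts2: "(1 + real m ^ (2*N)) * S1 \<le> real (length (tidx n \<alpha> (c,(e,j,\<gamma>)))) * T" by linarith
  have cb: "chB r j \<ge> 0" by (rule chB(1)[OF r])
  have "norm (complex_of_real (mon (Suc n) \<alpha> y) * Phi n r a \<sigma> (F m) (e,j,\<gamma>) y)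
      \<le> chB r j * ((4*W)^N * (1 + real m ^ (2*N))) * S1"
    using order_trans[OF pb mult_right_mono[OF mult_left_mono[OF KW cb] S10]] .
  also have "\<dots> = chB r j * (4*W)^N * ((1 + real m ^ (2*N)) * S1)" by (simp add: algebra_simps)
  also have "\<dots> \<le> chB r j * (4*W)^N * (real (length (tidx n \<alpha> (c,(e,j,\<gamma>)))) * T)"
    using ts2 cb A r by (intro mult_left_mono) (auto simp: W_def)
  finally have "norm (complex_of_real (mon (Suc n) \<alpha> y) * Phi n r a \<sigma> (F m) (e,j,\<gamma>) y)
      \<le> chB r j * (4*W)^N * (real (length (tidx n \<alpha> (c,(e,j,\<gamma>)))) * T)" .
  then have "\<bar>c\<bar> * norm (complex_of_real (mon (Suc n) \<alpha> y) * Phi n r a \<sigma> (F m) (e,j,\<gamma>) y)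
      \<le> \<bar>c\<bar> * (chB r j * (4*W)^N * (real (length (tidx n \<alpha> (c,(e,j,\<gamma>)))) * T))"
    by (intro mult_left_mono) auto
  then show ?thesis unfolding W_def N_def by (simp add: algebra_simps)
qed

lemma evalL_norm:
  "norm (complex_of_real M * evalL n r a \<sigma> G L y) \<le> sum_list (map (\<lambda>(c,t). \<bar>c\<bar> * norm (complex_of_real M * Phi n r a \<sigma> G t y)) L)"
proof (induction L)
  case Nil then show ?case by (simp add: evalL_def)
next
  case (Cons p L)
  obtain c t where p: "p = (c,t)" by (cases p) auto
  have "complex_of_real M * evalL n r a \<sigma> G (p#L) y = complex_of_real c * (complex_of_real M * Phi n r a \<sigma> G t y) + complex_of_real M * evalL n r a \<sigma> G L y"
    using p by (simp add: evalL_def algebra_simps)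
  hence "norm (complex_of_real M * evalL n r a \<sigma> G (p#L) y) \<le> \<bar>c\<bar> * norm (complex_of_real M * Phi n r a \<sigma> G t y) + norm (complex_of_real M * evalL n r a \<sigma> G L y)"
    by (simp add: norm_triangle_ineq order_trans[OF norm_triangle_ineq] norm_mult)
  then show ?case using Cons p by simp
qed

lemma evalL_final_bound:
  assumes r: "r > 0" and A: "A \<ge> 0" and v: "validL n L" and \<sigma>: "\<bar>\<sigma>\<bar> = 1"
    and F: "ts_space n F" and y: "y \<in> Eucl (Suc n)" and a: "\<bar>a\<bar> \<le> A * (real m + 1)^2"
  shows "norm (complex_of_real (mon (Suc n) \<alpha> y) * evalL n r a \<sigma> (F m) L y) \<le> CL n r A \<alpha> L * (\<Sum>i\<in>IL n \<alpha> L. tnorm n i F)"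
proof -
  define T where "T = (\<Sum>i\<in>IL n \<alpha> L. tnorm n i F)"
  have Ti: "tnorm n i F \<le> T" if "i \<in> IL n \<alpha> L" for i
  proof -
    have nn: "\<forall>j\<in>IL n \<alpha> L. 0 \<le> tnorm n j F"
      using IL_valid[OF v] tnorm_nonneg[OF F] by fast
    show ?thesis unfolding T_def using nn IL_finite by (intro member_le_sum[OF that]) auto
  qed
  have "norm (complex_of_real (mon (Suc n) \<alpha> y) * evalL n r a \<sigma> (F m) L y)
      \<le> sum_list (map (\<lambda>(c,t). \<bar>c\<bar> * norm (complex_of_real (mon (Suc n) \<alpha> y) * Phi n r a \<sigma> (F m) t y)) L)"
    by (rule evalL_norm)
  also have "\<dots> \<le> sum_list (map (\<lambda>(c,(e,j,\<gamma>)). \<bar>c\<bar> * chB r j * (4*((1+A+r)*real (n+1)))^(\<alpha> 0 + e 0)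
        * real (length (tidx n \<alpha> (c,(e,j,\<gamma>)))) * T) L)"
  proof (rule sum_list_mono)
    fix p assume p: "p \<in> set L"
    obtain c e j \<gamma> where pp: "p = (c,(e,j,\<gamma>))" by (cases p) auto
    have g: "set \<gamma> \<subseteq> {..<n}" using v p pp unfolding validL_def by fastforce
    have T': "\<forall>i\<in>set (tidx n \<alpha> (c,(e,j,\<gamma>))). tnorm n i F \<le> T"
      using Ti p pp unfolding IL_def by blast
    show "(case p of (c,t) \<Rightarrow> \<bar>c\<bar> * norm (complex_of_real (mon (Suc n) \<alpha> y) * Phi n r a \<sigma> (F m) t y))
       \<le> (case p of (c,(e,j,\<gamma>)) \<Rightarrow> \<bar>c\<bar> * chB r j * (4*((1+A+r)*real (n+1)))^(\<alpha> 0 + e 0)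
        * real (length (tidx n \<alpha> (c,(e,j,\<gamma>)))) * T)"
      unfolding pp using term_bound[OF r A g \<sigma> F y a T'] by simp
  qed
  also have "\<dots> = CL n r A \<alpha> L * T"
    unfolding CL_def sum_list_mult_const[symmetric] by (rule arg_cong[where f=sum_list]) (auto intro!: map_cong)
  finally show ?thesis unfolding T_def .
qed




definition near :: "nat \<Rightarrow> (nat \<Rightarrow> real) \<Rightarrow> real \<Rightarrow> (nat \<Rightarrow> real) \<Rightarrow> bool" where
  "near N y e z \<longleftrightarrow> z \<in> Eucl N \<and> (\<forall>i<N. \<bar>z i - y i\<bar> < e)"

lemma near_upd:
  assumes "near N y e z" "i < N" "\<bar>t - z i\<bar> < e - \<bar>z i - y i\<bar>"
  shows "near N y e (z(i := t))"
  using assms unfolding near_def by (auto simp: Eucl_upd)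

lemma ev_ball: "e > 0 \<Longrightarrow> eventually (\<lambda>t. \<bar>t - x\<bar> < e) (nhds (x::real))"
  unfolding eventually_nhds by (intro exI[of _ "ball x e"]) (auto simp: dist_real_def abs_minus_commute)

lemma pds_local:
  assumes fg: "\<forall>z. near N y e z \<longrightarrow> f z = g z" and b: "set \<beta> \<subseteq> {..<N}"
  shows "near N y e z \<Longrightarrow> pds \<beta> f z = pds \<beta> g z"
  using b
proof (induction \<beta> arbitrary: z)
  case Nil then show ?case using fg by simp
next
  case (Cons i js)
  have i: "i < N" and js: "set js \<subseteq> {..<N}" using Cons.prems by auto
  have pos: "e - \<bar>z i - y i\<bar> > 0" using Cons.prems(1) i unfolding near_def by auto
  have IH': "pds js f (z(i:=t)) = pds js g (z(i:=t))" if "\<bar>t - z i\<bar> < e - \<bar>z i - y i\<bar>" for t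
    using Cons.IH[OF near_upd[OF Cons.prems(1) i that] js] .
  have "eventually (\<lambda>t. t \<in> UNIV \<longrightarrow> pds js f (z(i:=t)) = pds js g (z(i:=t))) (nhds (z i))"
    using ev_ball[OF pos] by eventually_elim (use IH' in blast)
  then have "vector_derivative (\<lambda>t. pds js f (z(i:=t))) (at (z i)) = vector_derivative (\<lambda>t. pds js g (z(i:=t))) (at (z i))"
    by (rule vector_derivative_cong_eq) auto
  then show ?case by (simp add: pd_def)
qed

lemma pds_local_diff:
  assumes fg: "\<forall>z. near N y e z \<longrightarrow> f z = g z" and b: "set \<beta> \<subseteq> {..<N}" and y: "y \<in> Eucl N"
    and e: "e > 0" and i: "i < N"
    and d: "(\<lambda>t. pds \<beta> g (y(i := t))) differentiable (at (y i))"
  shows "(\<lambda>t. pds \<beta> f (y(i := t))) differentiable (at (y i))"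
proof (rule differentiable_transform_within[OF d e])
  fix t assume "t \<in> UNIV" "dist t (y i) < e"
  then have "near N y e (y(i := t))" using y i by (intro near_upd) (auto simp: near_def dist_real_def)
  then show "pds \<beta> g (y(i := t)) = pds \<beta> f (y(i := t))" using pds_local[OF fg b] by simp
qed simp

lemma pds_zero: "pds \<beta> (\<lambda>_. 0) = (\<lambda>_. 0)"
  by (induction \<beta>) (auto simp: pd_def fun_eq_iff)

lemma sv_close:
  assumes e1: "e \<le> 1" and c: "\<forall>i<Suc n. \<bar>z i - y i\<bar> < e"
  shows "\<bar>sv n z - sv n y\<bar> \<le> e * (\<Sum>i<Suc n. 2 * \<bar>y i\<bar> + 1)"
proof -
  have sq: "\<bar>(z i)^2 - (y i)^2\<bar> \<le> e * (2 * \<bar>y i\<bar> + 1)" if "i < Suc n" for i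
  proof -
    have d: "\<bar>z i - y i\<bar> \<le> e" using c that by force
    have s: "\<bar>z i + y i\<bar> \<le> 2 * \<bar>y i\<bar> + 1" using d e1 by linarith
    have e0: "0 \<le> e" using d abs_ge_zero order_trans by blast
    have "(z i)^2 - (y i)^2 = (z i - y i) * (z i + y i)" by (simp add: power2_eq_square algebra_simps)
    hence "\<bar>(z i)^2 - (y i)^2\<bar> = \<bar>z i - y i\<bar> * \<bar>z i + y i\<bar>" by (simp add: abs_mult)
    also have "\<dots> \<le> e * (2 * \<bar>y i\<bar> + 1)" by (rule mult_mono[OF d s]) (auto simp: e0)
    finally show ?thesis .
  qed
  have "sv n z - sv n y = ((z 0)^2 - (y 0)^2) - (\<Sum>l<n. (z (Suc l))^2 - (y (Suc l))^2)"
    by (simp add: sv_def sqnorm_def kp_def sum_subtractf)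
  hence "\<bar>sv n z - sv n y\<bar> \<le> \<bar>(z 0)^2 - (y 0)^2\<bar> + (\<Sum>l<n. \<bar>(z (Suc l))^2 - (y (Suc l))^2\<bar>)"
  proof -
    have "\<bar>\<Sum>l<n. (z (Suc l))^2 - (y (Suc l))^2\<bar> \<le> (\<Sum>l<n. \<bar>(z (Suc l))^2 - (y (Suc l))^2\<bar>)" by (rule sum_abs)
    then show ?thesis using abs_triangle_ineq4[of "(z 0)^2 - (y 0)^2" "\<Sum>l<n. (z (Suc l))^2 - (y (Suc l))^2"]
      by (simp only: \<open>sv n z - sv n y = _\<close>)
  qed
  also have "\<dots> \<le> e * (2 * \<bar>y 0\<bar> + 1) + (\<Sum>l<n. e * (2 * \<bar>y (Suc l)\<bar> + 1))"
    using sq by (intro add_mono sum_mono) auto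
  also have "\<dots> = e * (\<Sum>i<Suc n. 2 * \<bar>y i\<bar> + 1)"
    by (simp only: sum.lessThan_Suc_shift sum_distrib_left distrib_left)
  finally show ?thesis .
qed

definition aa :: "real \<Rightarrow> real \<Rightarrow> real \<Rightarrow> nat \<Rightarrow> real" where
  "aa S c \<mu> m = (qseq S c m)^2 + \<mu>^2"
definition dd :: "real \<Rightarrow> real \<Rightarrow> real \<Rightarrow> real" where
  "dd S c \<mu> = min ((qgap S c)^2/2) (\<mu>^2)"
definition rr :: "real \<Rightarrow> real \<Rightarrow> real \<Rightarrow> real" where
  "rr S c \<mu> = dd S c \<mu> / 2"
definition L0 :: "(real \<times> tm) list" where
  "L0 = [(1, (\<lambda>_. 0, 0, []))]"

definition Tf :: "real \<Rightarrow> real \<Rightarrow> real \<Rightarrow> nat \<Rightarrow> (nat \<Rightarrow> (nat \<Rightarrow> real) \<Rightarrow> complex) \<Rightarrow> (nat \<Rightarrow> (nat \<Rightarrow> real) \<Rightarrow> complex) \<Rightarrow> (nat \<Rightarrow> real) \<Rightarrow> complex" where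
  "Tf S c \<mu> n Fp Fm y = (if y \<in> Eucl (Suc n) \<and> (\<exists>m. \<bar>sv n y - aa S c \<mu> m\<bar> < dd S c \<mu>) then
      (let m = (THE m. \<bar>sv n y - aa S c \<mu> m\<bar> < dd S c \<mu>) in
        complex_of_real (chi (rr S c \<mu>) (sv n y - aa S c \<mu> m)) *
        (if y 0 > 0 then Fp m (kp y) else Fm m (\<lambda>l. - y (Suc l))))
     else 0)"

lemma validL_L0: "validL n L0" by (simp add: validL_def L0_def)

lemma evalL_L0: "evalL n r a \<sigma> G L0 y = (if y \<in> Eucl (Suc n) then complex_of_real (chi r (sv n y - a)) * G (\<lambda>l. \<sigma> * y (Suc l)) else 0)"
  by (simp add: evalL_def L0_def Phi_def mon_def chid_def)

context
  fixes S c \<mu> :: real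
  assumes S: "S > 0" and c: "c > 0" and \<mu>: "\<mu> > 0"
begin

lemma dd_pos: "dd S c \<mu> > 0" "rr S c \<mu> > 0" "rr S c \<mu> < dd S c \<mu>" "dd S c \<mu> \<le> \<mu>^2"
proof -
  have g: "(qgap S c)^2 > 0" using qgap_pos[OF S c] by simp
  have m: "\<mu>^2 > 0" using \<mu> by simp
  have d0: "dd S c \<mu> > 0" unfolding dd_def using g m by simp
  then show "dd S c \<mu> > 0" "rr S c \<mu> > 0" "rr S c \<mu> < dd S c \<mu>"
    unfolding rr_def by linarith+
  show "dd S c \<mu> \<le> \<mu>^2" by (simp add: dd_def)
qed

lemma aa_sep: assumes "m \<noteq> m'" shows "\<bar>aa S c \<mu> m - aa S c \<mu> m'\<bar> \<ge> 2 * dd S c \<mu>"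
proof -
  have "\<bar>aa S c \<mu> m - aa S c \<mu> m'\<bar> = \<bar>(qseq S c m)\<^sup>2 - (qseq S c m')\<^sup>2\<bar>" by (simp add: aa_def)
  also have "\<dots> \<ge> (qgap S c)^2" by (rule qsep[OF S c assms])
  finally show ?thesis unfolding dd_def by linarith
qed

lemma aa_uniq: "\<bar>x - aa S c \<mu> m\<bar> < dd S c \<mu> \<Longrightarrow> \<bar>x - aa S c \<mu> m'\<bar> < dd S c \<mu> \<Longrightarrow> m = m'"
  using aa_sep[of m m'] by (cases "m = m'") linarith+

lemma aa_THE: "\<bar>x - aa S c \<mu> m\<bar> < dd S c \<mu> \<Longrightarrow> (THE m. \<bar>x - aa S c \<mu> m\<bar> < dd S c \<mu>) = m"
  using aa_uniq by blast

lemma aa_ge: "aa S c \<mu> m \<ge> \<mu>^2" by (simp add: aa_def)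

lemma y0_sq: assumes "\<bar>sv n y - aa S c \<mu> m\<bar> < dd S c \<mu>" shows "(y 0)^2 > 0"
proof -
  have "sqnorm n (kp y) \<ge> 0" unfolding sqnorm_def by (intro sum_nonneg) auto
  moreover have "sv n y > 0" using assms aa_ge[of m] dd_pos(4) by linarith
  ultimately show ?thesis unfolding sv_def by linarith
qed

lemma aa_bound: "\<bar>aa S c \<mu> m\<bar> \<le> ((pi/S)^2 + \<mu>^2) * (real m + 1)^2"
proof -
  have q0: "qseq S c m \<ge> 0" by (rule qseq_nonneg[OF S c])
  have "qseq S c m \<le> (real m + 1) * pi / S" by (rule qseq_le[OF S c])
  hence "(qseq S c m)^2 \<le> ((real m + 1) * pi / S)^2" using q0 by (intro power_mono) auto
  also have "\<dots> = (pi/S)^2 * (real m + 1)^2" by (simp add: power_mult_distrib power_divide)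
  finally have a: "(qseq S c m)^2 \<le> (pi/S)^2 * (real m + 1)^2" .
  have "\<mu>^2 * 1 \<le> \<mu>^2 * (real m + 1)^2" by (intro mult_left_mono) auto
  with a show ?thesis by (simp add: aa_def algebra_simps)
qed

lemma chi_zero: "\<bar>t\<bar> \<ge> rr S c \<mu> \<Longrightarrow> chi (rr S c \<mu>) t = 0"
  using chid_zero[OF dd_pos(2), of t 0] by (simp add: chid_def)

lemma local_rep:
  assumes y: "y \<in> Eucl (Suc n)"
  shows "\<exists>e>0. \<exists>R. (\<forall>z. near (Suc n) y e z \<longrightarrow> Tf S c \<mu> n Fp Fm z = R z) \<and>
    (R = (\<lambda>_. 0) \<or> (\<exists>m. R = evalL n (rr S c \<mu>) (aa S c \<mu> m) 1 (Fp m) L0) \<or>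
     (\<exists>m. R = evalL n (rr S c \<mu>) (aa S c \<mu> m) (-1) (Fm m) L0))"
proof -
  define W where "W = (\<Sum>i<Suc n. 2 * \<bar>y i\<bar> + 1)"
  have W0: "W \<ge> 0" unfolding W_def by (intro sum_nonneg) auto
  have svc: "\<bar>sv n z - sv n y\<bar> \<le> e * W" if "e \<le> 1" "near (Suc n) y e z" for e z
    using sv_close[of e n z y] that unfolding near_def W_def by blast
  have ewl: "e * W < g" if "e > 0" "e \<le> g/(W+1)" for e g
  proof -
    have "e * (W+1) \<le> g" using that(2) W0 by (simp add: field_simps)
    thus ?thesis using that(1) by (simp add: algebra_simps)
  qed
  show ?thesis
  proof (cases "\<exists>m. \<bar>sv n y - aa S c \<mu> m\<bar> < dd S c \<mu>")
    case True
    then obtain m where m: "\<bar>sv n y - aa S c \<mu> m\<bar> < dd S c \<mu>" by blast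
    define gp where "gp = dd S c \<mu> - \<bar>sv n y - aa S c \<mu> m\<bar>"
    have gp: "gp > 0" using m by (simp add: gp_def)
    have y0: "y 0 \<noteq> 0" using y0_sq[OF m] by auto
    define e where "e = min 1 (min (gp/(W+1)) (\<bar>y 0\<bar>/2))"
    have e1: "e > 0" "e \<le> 1" unfolding e_def using gp W0 y0 by auto
    have e2: "e \<le> min (gp/(W+1)) (\<bar>y 0\<bar>/2)" unfolding e_def by (rule min.cobounded2)
    have e: "e > 0" "e \<le> 1" "e \<le> gp/(W+1)" "e \<le> \<bar>y 0\<bar>/2"
      using e1 e2 by (auto simp del: min_less_iff_conj)
    have eW: "e * W < gp" by (rule ewl[OF e(1) e(3)])
    have zm: "\<bar>sv n z - aa S c \<mu> m\<bar> < dd S c \<mu>" and zs: "(z 0 > 0) = (y 0 > 0)" and zE: "z \<in> Eucl (Suc n)"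
      if z: "near (Suc n) y e z" for z
    proof -
      have "\<bar>sv n z - sv n y\<bar> \<le> e * W" by (rule svc[OF e(2) z])
      then show "\<bar>sv n z - aa S c \<mu> m\<bar> < dd S c \<mu>" using eW unfolding gp_def by linarith
      have "\<bar>z 0 - y 0\<bar> < e" using z unfolding near_def by auto
      then show "(z 0 > 0) = (y 0 > 0)" using e(4) y0 by linarith
      show "z \<in> Eucl (Suc n)" using z unfolding near_def by auto
    qed
    have Tz: "Tf S c \<mu> n Fp Fm z = complex_of_real (chi (rr S c \<mu>) (sv n z - aa S c \<mu> m)) *
        (if y 0 > 0 then Fp m (kp z) else Fm m (\<lambda>l. - z (Suc l)))" if z: "near (Suc n) y e z" for z
      using zm[OF z] zs[OF z] zE[OF z] aa_THE[OF zm[OF z]] unfolding Tf_def Let_def by auto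
    show ?thesis
    proof (cases "y 0 > 0")
      case True
      have "\<forall>z. near (Suc n) y e z \<longrightarrow> Tf S c \<mu> n Fp Fm z = evalL n (rr S c \<mu>) (aa S c \<mu> m) 1 (Fp m) L0 z"
        using Tz True zE by (auto simp: evalL_L0 kp_def)
      then show ?thesis using e(1) by blast
    next
      case False
      have "\<forall>z. near (Suc n) y e z \<longrightarrow> Tf S c \<mu> n Fp Fm z = evalL n (rr S c \<mu>) (aa S c \<mu> m) (-1) (Fm m) L0 z"
        using Tz False zE by (auto simp: evalL_L0)
      then show ?thesis using e(1) by blast
    qed
  next
    case False
    define g where "g = dd S c \<mu> - rr S c \<mu>"
    have g: "g > 0" using dd_pos by (simp add: g_def)
    define e where "e = min 1 (g/(W+1))"
    have e: "e > 0" "e \<le> 1" "e \<le> g/(W+1)" using g W0 by (auto simp: e_def)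
    have eW: "e * W < g" by (rule ewl[OF e(1) e(3)])
    have "Tf S c \<mu> n Fp Fm z = 0" if z: "near (Suc n) y e z" for z
    proof (cases "\<exists>m. \<bar>sv n z - aa S c \<mu> m\<bar> < dd S c \<mu>")
      case True
      then obtain m where m: "\<bar>sv n z - aa S c \<mu> m\<bar> < dd S c \<mu>" by blast
      have "\<bar>sv n z - sv n y\<bar> \<le> e * W" by (rule svc[OF e(2) z])
      moreover have "\<not> \<bar>sv n y - aa S c \<mu> m\<bar> < dd S c \<mu>" using False by blast
      hence "\<bar>sv n y - aa S c \<mu> m\<bar> \<ge> dd S c \<mu>" by linarith
      ultimately have "\<bar>sv n z - aa S c \<mu> m\<bar> \<ge> rr S c \<mu>" using eW unfolding g_def by linarith
      then have "chi (rr S c \<mu>) (sv n z - aa S c \<mu> m) = 0" by (rule chi_zero)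
      then show ?thesis using aa_THE[OF m] unfolding Tf_def Let_def by auto
    next
      case False
      then show ?thesis unfolding Tf_def by auto
    qed
    then show ?thesis using e(1) by (intro exI[of _ e] conjI exI[of _ "\<lambda>_. 0"]) auto
  qed
qed

lemma near_self: "y \<in> Eucl N \<Longrightarrow> e > 0 \<Longrightarrow> near N y e y" by (simp add: near_def)

lemma Tf_diff:
  assumes Fp: "ts_space n Fp" and Fm: "ts_space n Fm" and b: "set \<beta> \<subseteq> {..<Suc n}"
    and y: "y \<in> Eucl (Suc n)" and i: "i < Suc n"
  shows "(\<lambda>t. pds \<beta> (Tf S c \<mu> n Fp Fm) (y(i := t))) differentiable (at (y i))"
proof -
  obtain e R where e: "e > 0" and loc: "\<forall>z. near (Suc n) y e z \<longrightarrow> Tf S c \<mu> n Fp Fm z = R z"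
    and R: "R = (\<lambda>_. 0) \<or> (\<exists>m. R = evalL n (rr S c \<mu>) (aa S c \<mu> m) 1 (Fp m) L0) \<or>
     (\<exists>m. R = evalL n (rr S c \<mu>) (aa S c \<mu> m) (-1) (Fm m) L0)"
    using local_rep[OF y, of Fp Fm] by (elim exE conjE) (rule that, assumption+)
  have "(\<lambda>t. pds \<beta> R (y(i := t))) differentiable (at (y i))"
  proof -
    consider "R = (\<lambda>_. 0)" | m where "R = evalL n (rr S c \<mu>) (aa S c \<mu> m) 1 (Fp m) L0"
      | m where "R = evalL n (rr S c \<mu>) (aa S c \<mu> m) (-1) (Fm m) L0" using R by blast
    then show ?thesis
    proof cases
      case 1 then show ?thesis by (simp add: pds_zero)
    next
      case (2 m)
      have G: "schwartz n (Fp m)" using Fp by (simp add: ts_space_def)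
      show ?thesis unfolding 2 by (rule pds_evalL_diff[OF G b validL_L0 i])
    next
      case (3 m)
      have G: "schwartz n (Fm m)" using Fm by (simp add: ts_space_def)
      show ?thesis unfolding 3 by (rule pds_evalL_diff[OF G b validL_L0 i])
    qed
  qed
  then show ?thesis by (rule pds_local_diff[OF loc b y e i])
qed

definition Ctot :: "nat \<Rightarrow> (nat \<Rightarrow> nat) \<Rightarrow> nat list \<Rightarrow> real" where
  "Ctot n \<alpha> \<beta> = CL n (rr S c \<mu>) ((pi/S)^2 + \<mu>^2) \<alpha> (DL 1 \<beta> L0) + CL n (rr S c \<mu>) ((pi/S)^2 + \<mu>^2) \<alpha> (DL (-1) \<beta> L0)"

definition Itot :: "nat \<Rightarrow> (nat \<Rightarrow> nat) \<Rightarrow> nat list \<Rightarrow> (nat \<times> (nat \<Rightarrow> nat) \<times> nat list) set" where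
  "Itot n \<alpha> \<beta> = IL n \<alpha> (DL 1 \<beta> L0) \<union> IL n \<alpha> (DL (-1) \<beta> L0)"

lemma Itot_props: assumes "set \<beta> \<subseteq> {..<Suc n}"
  shows "finite (Itot n \<alpha> \<beta>)" "\<forall>(c', \<alpha>', \<beta>') \<in> Itot n \<alpha> \<beta>. set \<beta>' \<subseteq> {..<n}"
proof -
  have v1: "validL n (DL 1 \<beta> L0)" and v2: "validL n (DL (-1) \<beta> L0)" using validL_DL[OF validL_L0 assms] by auto
  show "finite (Itot n \<alpha> \<beta>)" unfolding Itot_def using IL_finite by auto
  show "\<forall>(c', \<alpha>', \<beta>') \<in> Itot n \<alpha> \<beta>. set \<beta>' \<subseteq> {..<n}"
    unfolding Itot_def using IL_valid[OF v1, of \<alpha>] IL_valid[OF v2, of \<alpha>] by blast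
qed

lemma Ctot_nonneg: "Ctot n \<alpha> \<beta> \<ge> 0"
  unfolding Ctot_def using dd_pos(2) by (intro add_nonneg_nonneg CL_nonneg) auto

lemma Tf_bound:
  assumes Fp: "ts_space n Fp" and Fm: "ts_space n Fm" and b: "set \<beta> \<subseteq> {..<Suc n}"
    and y: "y \<in> Eucl (Suc n)"
  shows "norm (complex_of_real (mon (Suc n) \<alpha> y) * pds \<beta> (Tf S c \<mu> n Fp Fm) y)
     \<le> Ctot n \<alpha> \<beta> * (\<Sum>i\<in>Itot n \<alpha> \<beta>. tnorm n i Fp + tnorm n i Fm)"
proof -
  obtain e R where e: "e > 0" and loc: "\<forall>z. near (Suc n) y e z \<longrightarrow> Tf S c \<mu> n Fp Fm z = R z"
    and R: "R = (\<lambda>_. 0) \<or> (\<exists>m. R = evalL n (rr S c \<mu>) (aa S c \<mu> m) 1 (Fp m) L0) \<or>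
     (\<exists>m. R = evalL n (rr S c \<mu>) (aa S c \<mu> m) (-1) (Fm m) L0)"
    using local_rep[OF y, of Fp Fm] by (elim exE conjE) (rule that, assumption+)
  have eq: "pds \<beta> (Tf S c \<mu> n Fp Fm) y = pds \<beta> R y" by (rule pds_local[OF loc b near_self[OF y e]])
  define A where "A = (pi/S)^2 + \<mu>^2"
  have A0: "A \<ge> 0" by (simp add: A_def)
  have r0: "rr S c \<mu> > 0" by (rule dd_pos(2))
  define I1 where "I1 = IL n \<alpha> (DL 1 \<beta> L0)"
  define I2 where "I2 = IL n \<alpha> (DL (-1) \<beta> L0)"
  have v1: "validL n (DL 1 \<beta> L0)" and v2: "validL n (DL (-1) \<beta> L0)" using validL_DL[OF validL_L0 b] by auto
  have nnp: "\<forall>i\<in>Itot n \<alpha> \<beta>. 0 \<le> tnorm n i Fp" and nnm: "\<forall>i\<in>Itot n \<alpha> \<beta>. 0 \<le> tnorm n i Fm"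
  proof -
    have "\<forall>(c', \<alpha>', \<beta>') \<in> Itot n \<alpha> \<beta>. set \<beta>' \<subseteq> {..<n}" by (rule Itot_props(2)[OF b])
    then show "\<forall>i\<in>Itot n \<alpha> \<beta>. 0 \<le> tnorm n i Fp" "\<forall>i\<in>Itot n \<alpha> \<beta>. 0 \<le> tnorm n i Fm"
      using tnorm_nonneg[OF Fp] tnorm_nonneg[OF Fm] by auto
  qed
  have fin: "finite (Itot n \<alpha> \<beta>)" by (rule Itot_props(1)[OF b])
  define Tsum where "Tsum = (\<Sum>i\<in>Itot n \<alpha> \<beta>. tnorm n i Fp + tnorm n i Fm)"
  have Ts0: "Tsum \<ge> 0" unfolding Tsum_def using nnp nnm by (intro sum_nonneg) auto
  have sub1: "(\<Sum>i\<in>I1. tnorm n i Fp) \<le> Tsum"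
  proof -
    have "(\<Sum>i\<in>I1. tnorm n i Fp) \<le> (\<Sum>i\<in>Itot n \<alpha> \<beta>. tnorm n i Fp)"
      using nnp fin by (intro sum_mono2) (auto simp: I1_def Itot_def)
    also have "\<dots> \<le> Tsum" unfolding Tsum_def using nnm by (intro sum_mono) auto
    finally show ?thesis .
  qed
  have sub2: "(\<Sum>i\<in>I2. tnorm n i Fm) \<le> Tsum"
  proof -
    have "(\<Sum>i\<in>I2. tnorm n i Fm) \<le> (\<Sum>i\<in>Itot n \<alpha> \<beta>. tnorm n i Fm)"
      using nnm fin by (intro sum_mono2) (auto simp: I2_def Itot_def)
    also have "\<dots> \<le> Tsum" unfolding Tsum_def using nnp by (intro sum_mono) auto
    finally show ?thesis .
  qed
  have C1: "0 \<le> CL n (rr S c \<mu>) A \<alpha> (DL 1 \<beta> L0)" "0 \<le> CL n (rr S c \<mu>) A \<alpha> (DL (-1) \<beta> L0)"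
    using CL_nonneg[OF r0 A0] by auto
  have Ct: "Ctot n \<alpha> \<beta> = CL n (rr S c \<mu>) A \<alpha> (DL 1 \<beta> L0) + CL n (rr S c \<mu>) A \<alpha> (DL (-1) \<beta> L0)"
    by (simp add: Ctot_def A_def)
  consider "R = (\<lambda>_. 0)" | m where "R = evalL n (rr S c \<mu>) (aa S c \<mu> m) 1 (Fp m) L0"
      | m where "R = evalL n (rr S c \<mu>) (aa S c \<mu> m) (-1) (Fm m) L0" using R by blast
  then have "norm (complex_of_real (mon (Suc n) \<alpha> y) * pds \<beta> R y) \<le> Ctot n \<alpha> \<beta> * Tsum"
  proof cases
    case 1
    then show ?thesis using Ctot_nonneg Ts0 by (simp add: pds_zero)
  next
    case (2 m)
    have G: "schwartz n (Fp m)" using Fp by (simp add: ts_space_def)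
    have "norm (complex_of_real (mon (Suc n) \<alpha> y) * pds \<beta> R y)
        \<le> CL n (rr S c \<mu>) A \<alpha> (DL 1 \<beta> L0) * (\<Sum>i\<in>I1. tnorm n i Fp)"
      unfolding 2 pds_evalL[OF G b validL_L0] I1_def
      by (rule evalL_final_bound[OF r0 A0 v1 _ Fp y]) (auto simp: A_def aa_bound)
    also have "\<dots> \<le> CL n (rr S c \<mu>) A \<alpha> (DL 1 \<beta> L0) * Tsum" using sub1 C1 by (intro mult_left_mono) auto
    also have "\<dots> \<le> Ctot n \<alpha> \<beta> * Tsum" unfolding Ct using C1 Ts0 by (intro mult_right_mono) auto
    finally show ?thesis .
  next
    case (3 m)
    have G: "schwartz n (Fm m)" using Fm by (simp add: ts_space_def)
    have "norm (complex_of_real (mon (Suc n) \<alpha> y) * pds \<beta> R y)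
        \<le> CL n (rr S c \<mu>) A \<alpha> (DL (-1) \<beta> L0) * (\<Sum>i\<in>I2. tnorm n i Fm)"
      unfolding 3 pds_evalL[OF G b validL_L0] I2_def
      by (rule evalL_final_bound[OF r0 A0 v2 _ Fm y]) (auto simp: A_def aa_bound)
    also have "\<dots> \<le> CL n (rr S c \<mu>) A \<alpha> (DL (-1) \<beta> L0) * Tsum" using sub2 C1 by (intro mult_left_mono) auto
    also have "\<dots> \<le> Ctot n \<alpha> \<beta> * Tsum" unfolding Ct using C1 Ts0 by (intro mult_right_mono) auto
    finally show ?thesis .
  qed
  then show ?thesis unfolding eq Tsum_def .
qed

end

lemma pt_Eucl: "k \<in> Eucl n \<Longrightarrow> pt t k \<in> Eucl (Suc n)"
  by (auto simp: Eucl_def pt_def split: nat.splits)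

lemma kp_pt: "kp (pt t k) = k" by (simp add: kp_def pt_def)

lemma pt0: "pt t k 0 = t" by (simp add: pt_def)
lemma ptS: "pt t k (Suc l) = k l" by (simp add: pt_def)

lemma sqnorm_neg: "sqnorm n (\<lambda>i. - k i) = sqnorm n k" by (simp add: sqnorm_def)

theorem lemma1:
  fixes d :: nat and S c \<mu> :: real
  assumes "d \<ge> 1" and "S > 0" and "c > 0" and "\<mu> > 0"
  shows "\<exists>T :: (nat \<Rightarrow> (nat \<Rightarrow> real) \<Rightarrow> complex) \<times> (nat \<Rightarrow> (nat \<Rightarrow> real) \<Rightarrow> complex)
                 \<Rightarrow> ((nat \<Rightarrow> real) \<Rightarrow> complex).
    (\<forall>Fp Fm. ts_space (d - 1) Fp \<and> ts_space (d - 1) Fm \<longrightarrow> schwartz d (T (Fp, Fm))) \<and>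
    (\<forall>Fp Fm Gp Gm a b. ts_space (d - 1) Fp \<and> ts_space (d - 1) Fm \<and>
        ts_space (d - 1) Gp \<and> ts_space (d - 1) Gm \<longrightarrow>
        T (\<lambda>m k. a * Fp m k + b * Gp m k, \<lambda>m k. a * Fm m k + b * Gm m k)
          = (\<lambda>x. a * T (Fp, Fm) x + b * T (Gp, Gm) x)) \<and>
    (\<forall>\<alpha> \<beta>. set \<beta> \<subseteq> {..<d} \<longrightarrow>
        (\<exists>C \<ge> 0. \<exists>I. finite I \<and> (\<forall>(c', \<alpha>', \<beta>') \<in> I. set \<beta>' \<subseteq> {..<d - 1}) \<and>
           (\<forall>Fp Fm. ts_space (d - 1) Fp \<and> ts_space (d - 1) Fm \<longrightarrow>
              snorm d \<alpha> \<beta> (T (Fp, Fm)) \<le> C * (\<Sum>i\<in>I. tnorm (d - 1) i Fp + tnorm (d - 1) i Fm)))) \<and>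
    (\<forall>Fp Fm. ts_space (d - 1) Fp \<and> ts_space (d - 1) Fm \<longrightarrow>
        (\<forall>k \<in> Eucl (d - 1). \<forall>m.
           Fp m k = T (Fp, Fm) (pt (omega S c \<mu> (d - 1) k m) k) \<and>
           Fm m k = T (Fp, Fm) (pt (- omega S c \<mu> (d - 1) k m) (\<lambda>i. - k i))))"
proof -
  note S = \<open>S > 0\<close> and c = \<open>c > 0\<close> and \<mu> = \<open>\<mu> > 0\<close>
  define n where "n = d - 1"
  have d: "d = Suc n" using assms(1) by (simp add: n_def)
  define T :: "(nat \<Rightarrow> (nat \<Rightarrow> real) \<Rightarrow> complex) \<times> (nat \<Rightarrow> (nat \<Rightarrow> real) \<Rightarrow> complex) \<Rightarrow> ((nat \<Rightarrow> real) \<Rightarrow> complex)"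
    where "T = (\<lambda>(Fp,Fm). Tf S c \<mu> n Fp Fm)"
  have P1: "schwartz d (T (Fp, Fm))" if Fp: "ts_space n Fp" and Fm: "ts_space n Fm" for Fp Fm
    unfolding schwartz_def d T_def
  proof (intro conjI allI impI ballI)
    fix x assume "x \<notin> Eucl (Suc n)" then show "(case (Fp, Fm) of (Fp, Fm) \<Rightarrow> Tf S c \<mu> n Fp Fm) x = 0"
      by (simp add: Tf_def)
  next
    fix \<beta> x i assume b: "set \<beta> \<subseteq> {..<Suc n}" and x: "x \<in> Eucl (Suc n)" and i: "i < Suc n"
    show "(\<lambda>t. pds \<beta> (case (Fp, Fm) of (Fp, Fm) \<Rightarrow> Tf S c \<mu> n Fp Fm) (x(i := t))) differentiable at (x i)"
      using Tf_diff[OF S c \<mu> Fp Fm b x i] by simp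
  next
    fix \<beta> \<alpha> assume b: "set \<beta> \<subseteq> {..<Suc n}"
    show "bounded ((\<lambda>x. complex_of_real (mon (Suc n) \<alpha> x) * pds \<beta> (case (Fp, Fm) of (Fp, Fm) \<Rightarrow> Tf S c \<mu> n Fp Fm) x) ` Eucl (Suc n))"
      unfolding bounded_iff using Tf_bound[OF S c \<mu> Fp Fm b] by auto
  qed
  have P3: "\<exists>C \<ge> 0. \<exists>I. finite I \<and> (\<forall>(c', \<alpha>', \<beta>') \<in> I. set \<beta>' \<subseteq> {..<n}) \<and>
           (\<forall>Fp Fm. ts_space n Fp \<and> ts_space n Fm \<longrightarrow>
              snorm d \<alpha> \<beta> (T (Fp, Fm)) \<le> C * (\<Sum>i\<in>I. tnorm n i Fp + tnorm n i Fm))"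
    if b: "set \<beta> \<subseteq> {..<d}" for \<alpha> \<beta>
  proof -
    have b': "set \<beta> \<subseteq> {..<Suc n}" using b d by simp
    show ?thesis
    proof (intro exI[of _ "Ctot S c \<mu> n \<alpha> \<beta>"] conjI exI[of _ "Itot n \<alpha> \<beta>"] allI impI)
      show "Ctot S c \<mu> n \<alpha> \<beta> \<ge> 0" by (rule Ctot_nonneg[OF S c \<mu>])
      show "finite (Itot n \<alpha> \<beta>)" by (rule Itot_props(1)[OF S c \<mu> b'])
      show "\<forall>(c', \<alpha>', \<beta>') \<in> Itot n \<alpha> \<beta>. set \<beta>' \<subseteq> {..<n}" by (rule Itot_props(2)[OF S c \<mu> b'])
    next
      fix Fp Fm assume F: "ts_space n Fp \<and> ts_space n Fm"
      show "snorm d \<alpha> \<beta> (T (Fp, Fm)) \<le> Ctot S c \<mu> n \<alpha> \<beta> * (\<Sum>i\<in>Itot n \<alpha> \<beta>. tnorm n i Fp + tnorm n i Fm)"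
        unfolding snorm_def d T_def
        using Tf_bound[OF S c \<mu> _ _ b'] F zero_Eucl[of "Suc n"]
        by (intro cSUP_least) auto
    qed
  qed
  have P4: "Fp m k = T (Fp, Fm) (pt (omega S c \<mu> n k m) k) \<and>
           Fm m k = T (Fp, Fm) (pt (- omega S c \<mu> n k m) (\<lambda>i. - k i))"
    if k: "k \<in> Eucl n" for Fp Fm k m
  proof -
    define w where "w = omega S c \<mu> n k m"
    have arg: "sqnorm n k + (qseq S c m)\<^sup>2 + \<mu>\<^sup>2 \<ge> 0"
      unfolding sqnorm_def by (intro add_nonneg_nonneg sum_nonneg) auto
    have w2: "w^2 = sqnorm n k + (qseq S c m)\<^sup>2 + \<mu>\<^sup>2" using arg by (simp add: w_def omega_def)
    have wpos: "w > 0"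
    proof -
      have "sqnorm n k + (qseq S c m)\<^sup>2 + \<mu>\<^sup>2 > 0" using arg \<mu>
        by (smt (verit) sqnorm_def sum_nonneg zero_le_power2 zero_less_power2)
      then show ?thesis by (simp add: w_def omega_def)
    qed
    have sv1: "sv n (pt w k) = aa S c \<mu> m" using w2 by (simp add: sv_def kp_pt aa_def pt0)
    have sv2: "sv n (pt (- w) (\<lambda>i. - k i)) = aa S c \<mu> m" using w2 by (simp add: sv_def kp_pt aa_def pt0 sqnorm_neg)
    have dd0: "dd S c \<mu> > 0" by (rule dd_pos(1)[OF S c \<mu>])
    have r0: "rr S c \<mu> \<noteq> 0" using dd_pos(2)[OF S c \<mu>] by simp
    have chi0: "chi (rr S c \<mu>) 0 = 1" using chid_00[OF r0] by (simp add: chid_def)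
    have E1: "pt w k \<in> Eucl (Suc n)" by (rule pt_Eucl[OF k])
    have kn: "(\<lambda>i. - k i) \<in> Eucl n" using k by (simp add: Eucl_def)
    have E2: "pt (- w) (\<lambda>i. - k i) \<in> Eucl (Suc n)" by (rule pt_Eucl[OF kn])
    have T1: "Tf S c \<mu> n Fp Fm (pt w k) = Fp m k"
    proof -
      have ex: "\<bar>sv n (pt w k) - aa S c \<mu> m\<bar> < dd S c \<mu>" using sv1 dd0 by simp
      have cond: "pt w k \<in> Eucl (Suc n) \<and> (\<exists>m'. \<bar>sv n (pt w k) - aa S c \<mu> m'\<bar> < dd S c \<mu>)" using E1 ex by blast
      show ?thesis unfolding Tf_def Let_def aa_THE[OF S c \<mu> ex] using cond sv1 chi0 wpos
        by (simp add: kp_pt pt0)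
    qed
    have T2: "Tf S c \<mu> n Fp Fm (pt (- w) (\<lambda>i. - k i)) = Fm m k"
    proof -
      have ex: "\<bar>sv n (pt (- w) (\<lambda>i. - k i)) - aa S c \<mu> m\<bar> < dd S c \<mu>" using sv2 dd0 by simp
      have cond: "pt (- w) (\<lambda>i. - k i) \<in> Eucl (Suc n) \<and> (\<exists>m'. \<bar>sv n (pt (- w) (\<lambda>i. - k i)) - aa S c \<mu> m'\<bar> < dd S c \<mu>)" using E2 ex by blast
      show ?thesis unfolding Tf_def Let_def aa_THE[OF S c \<mu> ex] using cond sv2 chi0 wpos
        by (simp add: pt0 ptS)
    qed
    show ?thesis using T1 T2 by (simp add: T_def w_def)
  qed
  show ?thesis unfolding n_def[symmetric]
  proof (intro exI[of _ T] conjI allI impI ballI)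
    fix Fp Fm assume "ts_space n Fp \<and> ts_space n Fm"
    then show "schwartz d (T (Fp, Fm))" using P1 by blast
  next
    fix Fp Fm Gp Gm and a b :: complex
    show "T (\<lambda>m k. a * Fp m k + b * Gp m k, \<lambda>m k. a * Fm m k + b * Gm m k) = (\<lambda>x. a * T (Fp, Fm) x + b * T (Gp, Gm) x)"
    proof (rule ext)
      fix x
      show "T (\<lambda>m k. a * Fp m k + b * Gp m k, \<lambda>m k. a * Fm m k + b * Gm m k) x = a * T (Fp, Fm) x + b * T (Gp, Gm) x"
      proof (cases "x \<in> Eucl (Suc n) \<and> (\<exists>m. \<bar>sv n x - aa S c \<mu> m\<bar> < dd S c \<mu>)")
        case True
        then show ?thesis unfolding T_def Tf_def Let_def by (simp add: algebra_simps)
      next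
        case False
        show ?thesis unfolding T_def prod.case Tf_def if_not_P[OF False] by simp
      qed
    qed
  next
    fix \<alpha> \<beta> assume "set \<beta> \<subseteq> {..<d}"
    then show "\<exists>C \<ge> 0. \<exists>I. finite I \<and> (\<forall>(c', \<alpha>', \<beta>') \<in> I. set \<beta>' \<subseteq> {..<n}) \<and>
           (\<forall>Fp Fm. ts_space n Fp \<and> ts_space n Fm \<longrightarrow>
              snorm d \<alpha> \<beta> (T (Fp, Fm)) \<le> C * (\<Sum>i\<in>I. tnorm n i Fp + tnorm n i Fm))" by (rule P3)
  next
    fix Fp Fm k m assume "k \<in> Eucl n"
    then show "Fp m k = T (Fp, Fm) (pt (omega S c \<mu> n k m) k)" "Fm m k = T (Fp, Fm) (pt (- omega S c \<mu> n k m) (\<lambda>i. - k i))"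
      using P4 by blast+
  qed
qed


end
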